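(* Let $n\ge 2$ be an integer, $k,c_b>0$, $\rho_0>0$, and let $\lambda_{1,0},\dots,\lambda_{n,0}$ be real numbers with $\lambda_{1,0}<\lambda_{2,0}\le\cdots\le\lambda_{n,0}$. Consider the system $$\lambda_i'=-\lambda_i^2+\frac{k}{n}(\rho-c_b)\ (i=1,\dots,n),\qquad \rho'=-\rho\lambda,\quad \lambda=\sum_{i=1}^n\lambda_i,\qquad \rho(0)=\rho_0,\ \lambda_i(0)=\lambda_{i,0},$$ suppose its maximal interval of existence is $[0,t_B)$ with $0<t_B<\infty$, let $u_i(t)=e^{\int_0^t\lambda_i(s)\,ds}$, and let $p,q$ satisfy $\lim_{t\to t_B^-}u_1'(t)u_n(t)=-p$, $\lim_{t\to t_B^-}u_1(t)u_n'(t)=q$. Assume $p>q$ and that $\xi_1:=\frac{-p}{p-q}$ and $\xi_n:=\frac{q}{p-q}$ both satisfy $\xi^2+\xi=0$ (so $\xi_1=-1$, $\xi_n=0$), and define $R_1(t):=\lambda_1(t)+\frac1{t_B-t}$. Then $\lambda_i\in L^1(0,t_B)$ for $i=2,\dots,n$, and $\int_0^{t}R_1(s)\,ds$ converges to a finite constant as $t\to t_B^-$.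
   Context: Solutions are real-valued and continuously differentiable on $[0,t_B)$. It is known that the limits defining $p,q$ exist with $0\le q\le p$. *)

theory Defs
  imports "HOL-Analysis.Analysis"
begin

definition is_solution ::
  "nat \<Rightarrow> real \<Rightarrow> real \<Rightarrow> real \<Rightarrow> (nat \<Rightarrow> real) \<Rightarrow> real
   \<Rightarrow> (nat \<Rightarrow> real \<Rightarrow> real) \<Rightarrow> (real \<Rightarrow> real) \<Rightarrow> bool" where
  "is_solution n k cb rho0 lam0 T lam rho \<longleftrightarrow>
     (\<forall>t\<in>{0..<T}. \<forall>i\<in>{1..n}.
        (lam i has_real_derivative (k / real n * (rho t - cb) - lam i t * lam i t))
          (at t within {0..<T})) \<and>
     (\<forall>t\<in>{0..<T}.
        (rho has_real_derivative (- rho t * (\<Sum>i=1..n. lam i t))) (at t within {0..<T})) \<and>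
     rho 0 = rho0 \<and> (\<forall>i\<in>{1..n}. lam i 0 = lam0 i)"

definition maximal_solution ::
  "nat \<Rightarrow> real \<Rightarrow> real \<Rightarrow> real \<Rightarrow> (nat \<Rightarrow> real) \<Rightarrow> real
   \<Rightarrow> (nat \<Rightarrow> real \<Rightarrow> real) \<Rightarrow> (real \<Rightarrow> real) \<Rightarrow> bool" where
  "maximal_solution n k cb rho0 lam0 T lam rho \<longleftrightarrow>
     is_solution n k cb rho0 lam0 T lam rho \<and>
     \<not> (\<exists>T'>T. \<exists>lam' rho'. is_solution n k cb rho0 lam0 T' lam' rho')"

end

theory Submission
  imports Defs
begin

lemma nat_dist_aux:
  fixes a b :: nat assumes "\<bar>real a - real b\<bar> * 2 < 1" shows "a = b"
proof (rule ccontr)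
  assume "a \<noteq> b"
  then have "a + 1 \<le> b \<or> b + 1 \<le> a" by linarith
  then have "real a + 1 \<le> real b \<or> real b + 1 \<le> real a" by (metis of_nat_1 of_nat_add of_nat_le_iff)
  then show False using assms by (auto simp: abs_if split: if_splits)
qed

instantiation nat :: metric_space
begin

definition dist_nat :: "nat \<Rightarrow> nat \<Rightarrow> real" where "dist_nat m n = \<bar>real m - real n\<bar>"

definition uniformity_nat :: "(nat \<times> nat) filter" where
  "uniformity_nat = (INF e\<in>{0<..}. principal {(x, y). dist x y < e})"

instance
proof
  show "uniformity = (INF e\<in>{0<..}. principal {(x, y). dist (x::nat) y < e})"
    by (rule uniformity_nat_def)
  show "open U \<longleftrightarrow> (\<forall>x\<in>U. \<forall>\<^sub>F (x', y) in uniformity. x' = x \<longrightarrow> y \<in> U)" for U :: "nat set"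
  proof -
    have "\<forall>\<^sub>F (x', y) in uniformity. x' = x \<longrightarrow> y \<in> U" if "x \<in> U" for x
    proof -
      have "\<forall>\<^sub>F (x', y) in principal {(x, y). dist (x::nat) y < 1/2}. x' = x \<longrightarrow> y \<in> U"
        unfolding eventually_principal using that by (auto simp: dist_nat_def dest: nat_dist_aux)
      then show ?thesis unfolding uniformity_nat_def
        by (rule eventually_INF1[rotated]) simp
    qed
    then show ?thesis by (simp add: open_discrete)
  qed
  show "dist x y = 0 \<longleftrightarrow> x = y" for x y :: nat by (simp add: dist_nat_def)
  show "dist x y \<le> dist x z + dist y z" for x y z :: nat by (simp add: dist_nat_def)
qed

end

instance bcontfun :: (metric_space, banach) banach ..

lemma picard_local:
  fixes F :: "'a::banach \<Rightarrow> 'a" and y0 :: 'a and t0 h r L M :: real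
  assumes r: "0 < r" and hpos: "0 < h" and L: "0 \<le> L"
    and lip: "\<And>x y. x \<in> cball y0 r \<Longrightarrow> y \<in> cball y0 r \<Longrightarrow> norm (F x - F y) \<le> L * norm (x - y)"
    and bnd: "\<And>x. x \<in> cball y0 r \<Longrightarrow> norm (F x) \<le> M"
    and hM: "h * M \<le> r" and hL: "h * L < 1"
  shows "\<exists>z. z t0 = y0 \<and> (\<forall>t\<in>{t0..t0+h}. (z has_vector_derivative F (z t)) (at t within {t0..t0+h}))"
proof -
  define S :: "(real \<Rightarrow>\<^sub>C 'a) set" where "S = PiC UNIV (\<lambda>_. cball y0 r)"
  define cl where "cl t = max t0 (min t (t0+h))" for t
  have cl_in: "cl t \<in> {t0..t0+h}" for t using hpos by (auto simp: cl_def)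
  have cl_id: "t \<in> {t0..t0+h} \<Longrightarrow> cl t = t" for t by (auto simp: cl_def)
  have cl_cont: "continuous_on UNIV cl" unfolding cl_def by (intro continuous_intros)
  have M0: "0 \<le> M" using bnd[of y0] r by (auto intro: order_trans[OF norm_ge_zero])
  have contF: "continuous_on (cball y0 r) F"
  proof (rule lipschitz_on_continuous_on)
    show "L-lipschitz_on (cball y0 r) F"
      by (rule lipschitz_onI) (use lip L in \<open>auto simp: dist_norm\<close>)
  qed
  have memS: "f \<in> S \<longleftrightarrow> (\<forall>t. apply_bcontfun f t \<in> cball y0 r)" for f
    by (auto simp: S_def mem_PiC_iff)
  have contg: "continuous_on UNIV (\<lambda>s. F (apply_bcontfun f s))" if "f \<in> S" for f
    by (rule continuous_on_compose2[OF contF]) (use that memS in auto)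
  have intg: "(\<lambda>s. F (apply_bcontfun f s)) integrable_on {t0..t0+h}" if "f \<in> S" for f
    by (rule integrable_continuous_interval) (use contg[OF that] continuous_on_subset in blast)
  have ibound: "norm (integral {t0..u} (\<lambda>s. F (apply_bcontfun f s))) \<le> M * (u - t0)"
    if "f \<in> S" "u \<in> {t0..t0+h}" for f u
  proof (rule integral_bound)
    show "t0 \<le> u" using that by auto
    show "continuous_on {t0..u} (\<lambda>s. F (apply_bcontfun f s))" using contg[OF that(1)] continuous_on_subset by blast
    show "norm (F (apply_bcontfun f s)) \<le> M" for s using bnd memS that(1) by blast
  qed
  define G where "G f t = y0 + integral {t0..cl t} (\<lambda>s. F (apply_bcontfun f s))" for f t
  have Gbc: "G f \<in> bcontfun" if "f \<in> S" for f
  proof (rule bcontfun_normI)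
    have "continuous_on UNIV (\<lambda>t. integral {t0..cl t} (\<lambda>s. F (apply_bcontfun f s)))"
      by (rule continuous_on_compose2[OF indefinite_integral_continuous_1[OF intg[OF that]] cl_cont])
        (use cl_in in auto)
    then show "continuous_on UNIV (G f)" unfolding G_def by (intro continuous_intros)
    show "norm (G f t) \<le> norm y0 + M * h" for t
    proof -
      have "norm (G f t) \<le> norm y0 + norm (integral {t0..cl t} (\<lambda>s. F (apply_bcontfun f s)))"
        unfolding G_def by (rule norm_triangle_ineq)
      also have "\<dots> \<le> norm y0 + M * (cl t - t0)" using ibound[OF that cl_in] by simp
      also have "\<dots> \<le> norm y0 + M * h" using cl_in[of t] M0 by (auto intro!: mult_left_mono)
      finally show ?thesis .
    qed
  qed
  define T where "T f = Bcontfun (G f)" for f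
  have Tapp: "f \<in> S \<Longrightarrow> apply_bcontfun (T f) t = G f t" for f t
    unfolding T_def using Gbc by (simp add: Bcontfun_inverse)
  have complS: "complete S"
    unfolding complete_eq_closed S_def by (rule closed_PiC) auto
  have neS: "S \<noteq> {}"
    using memS[of "const_bcontfun y0"] r by auto
  have TS: "T ` S \<subseteq> S"
  proof safe
    fix f assume f: "f \<in> S"
    show "T f \<in> S" unfolding memS
    proof
      fix t
      have "dist y0 (G f t) = norm (integral {t0..cl t} (\<lambda>s. F (apply_bcontfun f s)))"
        by (simp add: G_def dist_norm)
      also have "\<dots> \<le> M * (cl t - t0)" using ibound[OF f cl_in] .
      also have "\<dots> \<le> M * h" using cl_in[of t] M0 by (auto intro!: mult_left_mono)
      also have "\<dots> \<le> r" using hM by (simp add: mult.commute)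
      finally show "apply_bcontfun (T f) t \<in> cball y0 r" by (simp add: Tapp[OF f])
    qed
  qed
  have contr: "dist (T f) (T g) \<le> (h * L) * dist f g" if f: "f \<in> S" and g: "g \<in> S" for f g
  proof (rule dist_bound)
    fix t
    have "dist (apply_bcontfun (T f) t) (apply_bcontfun (T g) t)
        = norm (integral {t0..cl t} (\<lambda>s. F (apply_bcontfun f s)) - integral {t0..cl t} (\<lambda>s. F (apply_bcontfun g s)))"
      by (simp add: Tapp f g G_def dist_norm)
    also have "\<dots> = norm (integral {t0..cl t} (\<lambda>s. F (apply_bcontfun f s) - F (apply_bcontfun g s)))"
    proof -
      have "{t0..cl t} \<subseteq> {t0..t0+h}" using cl_in[of t] by auto
      then show ?thesis
        using integral_diff[OF integrable_on_subinterval[OF intg[OF f]] integrable_on_subinterval[OF intg[OF g]]]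
        by simp
    qed
    also have "\<dots> \<le> (L * dist f g) * (cl t - t0)"
    proof (rule integral_bound)
      show "t0 \<le> cl t" using cl_in[of t] by auto
      show "continuous_on {t0..cl t} (\<lambda>s. F (apply_bcontfun f s) - F (apply_bcontfun g s))"
        using contg[OF f] contg[OF g] by (intro continuous_intros) (auto intro: continuous_on_subset)
      fix s
      have "norm (F (apply_bcontfun f s) - F (apply_bcontfun g s)) \<le> L * norm (apply_bcontfun f s - apply_bcontfun g s)"
        using lip memS f g by blast
      also have "\<dots> \<le> L * dist f g"
        using dist_bounded[of f s g] L by (auto simp: dist_norm intro: mult_left_mono)
      finally show "norm (F (apply_bcontfun f s) - F (apply_bcontfun g s)) \<le> L * dist f g" .
    qed
    also have "\<dots> \<le> (L * dist f g) * h"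
      using cl_in[of t] L by (auto intro!: mult_left_mono)
    finally show "dist (apply_bcontfun (T f) t) (apply_bcontfun (T g) t) \<le> (h * L) * dist f g"
      by (simp add: algebra_simps)
  qed
  obtain z where zS: "z \<in> S" and zfix: "T z = z"
    using Banach_fix[OF complS neS _ hL TS contr] hpos L by auto
  have zeq: "apply_bcontfun z t = G z t" for t
    using Tapp[OF zS, of t] zfix by simp
  show ?thesis
  proof (intro exI conjI ballI)
    show "apply_bcontfun z t0 = y0" using zeq[of t0] cl_id[of t0] hpos by (simp add: G_def)
    fix t assume t: "t \<in> {t0..t0+h}"
    have "((\<lambda>u. integral {t0..u} (\<lambda>s. F (apply_bcontfun z s))) has_vector_derivative F (apply_bcontfun z t)) (at t within {t0..t0+h})"
      by (rule integral_has_vector_derivative[OF _ t])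
        (use contg[OF zS] continuous_on_subset in blast)
    then have "((\<lambda>u. y0 + integral {t0..u} (\<lambda>s. F (apply_bcontfun z s))) has_vector_derivative F (apply_bcontfun z t)) (at t within {t0..t0+h})"
      using has_vector_derivative_add[OF has_vector_derivative_const[of y0]] by fastforce
    note d = this
    show "(apply_bcontfun z has_vector_derivative F (apply_bcontfun z t)) (at t within {t0..t0+h})"
      by (rule has_vector_derivative_transform[OF t _ d]) (subst zeq, simp add: G_def cl_id)
  qed
qed


definition mkv :: "nat \<Rightarrow> (nat \<Rightarrow> real) \<Rightarrow> (nat \<Rightarrow>\<^sub>C real)" where
  "mkv n f = Bcontfun (\<lambda>i. if i \<le> n then f i else 0)"

lemma mkv_bc: "(\<lambda>i::nat. if i \<le> n then f i else (0::real)) \<in> bcontfun"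
proof (rule bcontfun_normI)
  show "continuous_on UNIV (\<lambda>i::nat. if i \<le> n then f i else (0::real))" by simp
  show "norm (if i \<le> n then f i else 0) \<le> (\<Sum>j\<le>n. \<bar>f j\<bar>)" for i
  proof (cases "i \<le> n")
    case True
    then have "\<bar>f i\<bar> \<le> (\<Sum>j\<le>n. \<bar>f j\<bar>)"
      by (intro member_le_sum) auto
    then show ?thesis using True by simp
  next
    case False
    then show ?thesis by (simp add: sum_nonneg)
  qed
qed

lemma mkv_apply[simp]: "apply_bcontfun (mkv n f) i = (if i \<le> n then f i else 0)"
  by (simp add: mkv_def Bcontfun_inverse[OF mkv_bc])

lemma comp_le_norm: "\<bar>apply_bcontfun (x::nat \<Rightarrow>\<^sub>C real) i\<bar> \<le> norm x"
  using norm_bounded[of x i] by simp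

lemma comp_diff_le: "\<bar>apply_bcontfun (x::nat \<Rightarrow>\<^sub>C real) i - apply_bcontfun y i\<bar> \<le> norm (x - y)"
  using comp_le_norm[of "x - y" i] by simp

lemma comp_vd:
  fixes z :: "real \<Rightarrow> (nat \<Rightarrow>\<^sub>C real)"
  assumes "(z has_vector_derivative D) F"
  shows "((\<lambda>t. apply_bcontfun (z t) j) has_real_derivative apply_bcontfun D j) F"
proof -
  have bl: "bounded_linear (\<lambda>f::nat \<Rightarrow>\<^sub>C real. apply_bcontfun f j)"
    by (rule bounded_linear_intro[where K=1]) (auto simp: comp_le_norm)
  have "((\<lambda>t. apply_bcontfun (z t) j) has_derivative (\<lambda>x. apply_bcontfun (x *\<^sub>R D) j)) F"
    using bounded_linear.has_derivative[OF bl assms[unfolded has_vector_derivative_def]] by simp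
  moreover have e: "(\<lambda>x. x * apply_bcontfun D j) = (*) (apply_bcontfun D j)" by (auto simp: mult.commute)
  ultimately show ?thesis
    unfolding has_field_derivative_def e[symmetric] by simp
qed

definition fld :: "nat \<Rightarrow> real \<Rightarrow> real \<Rightarrow> (nat \<Rightarrow> real) \<Rightarrow> nat \<Rightarrow> real" where
  "fld n k cb v j = (if j = 0 then - v 0 * (\<Sum>i=1..n. v i) else k / real n * (v 0 - cb) - v j * v j)"

definition Fv :: "nat \<Rightarrow> real \<Rightarrow> real \<Rightarrow> (nat \<Rightarrow>\<^sub>C real) \<Rightarrow> (nat \<Rightarrow>\<^sub>C real)" where
  "Fv n k cb y = mkv n (fld n k cb (apply_bcontfun y))"

lemma sum_abs_le_card:
  assumes "\<And>j. j \<in> {1..n} \<Longrightarrow> \<bar>f j\<bar> \<le> (c::real)"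
  shows "\<bar>\<Sum>j=1..n. f j\<bar> \<le> real n * c"
proof -
  have "\<bar>\<Sum>j=1..n. f j\<bar> \<le> (\<Sum>j=1..n. \<bar>f j\<bar>)" by (rule sum_abs)
  also have "\<dots> \<le> real (card {1..n}) * c" by (rule sum_bounded_above) (use assms in auto)
  finally show ?thesis by simp
qed

lemma Fv_lip:
  assumes x: "norm x \<le> R" and y: "norm y \<le> R" and R: "0 \<le> R" and k: "0 \<le> k"
  shows "norm (Fv n k cb x - Fv n k cb y) \<le> (2 * real n * R + k / real n + 2 * R) * norm (x - y)"
proof (rule norm_bound)
  fix i
  define d where "d = norm (x - y)"
  have d0: "0 \<le> d" by (simp add: d_def)
  have cx: "\<bar>apply_bcontfun x j\<bar> \<le> R" for j using comp_le_norm[of x j] x by linarith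
  have cy: "\<bar>apply_bcontfun y j\<bar> \<le> R" for j using comp_le_norm[of y j] y by linarith
  have cd: "\<bar>apply_bcontfun x j - apply_bcontfun y j\<bar> \<le> d" for j using comp_diff_le[of x j y] by (simp add: d_def)
  have kn: "0 \<le> k / real n" using k by simp
  have tot: "0 \<le> 2 * real n * R + k / real n + 2 * R" using R kn by simp
  show "norm (apply_bcontfun (Fv n k cb x - Fv n k cb y) i) \<le> (2 * real n * R + k / real n + 2 * R) * d"
  proof (cases "i \<le> n")
    case False
    then show ?thesis using tot d0 by (simp add: Fv_def)
  next
    case iT: True
    show ?thesis
    proof (cases "i = 0")
      case True
      define Sx where "Sx = (\<Sum>j=1..n. apply_bcontfun x j)"
      define Sy where "Sy = (\<Sum>j=1..n. apply_bcontfun y j)"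
      have Sx: "\<bar>Sx\<bar> \<le> real n * R" unfolding Sx_def by (rule sum_abs_le_card) (use cx in auto)
      have Sxy: "\<bar>Sx - Sy\<bar> \<le> real n * d"
        unfolding Sx_def Sy_def sum_subtractf[symmetric] by (rule sum_abs_le_card) (use cd in auto)
      have "apply_bcontfun (Fv n k cb x - Fv n k cb y) i
          = (apply_bcontfun x 0 - apply_bcontfun y 0) * (- Sx) + apply_bcontfun y 0 * (Sy - Sx)"
        using True by (simp add: Fv_def fld_def Sx_def Sy_def algebra_simps)
      also have "\<bar>\<dots>\<bar> \<le> d * (real n * R) + R * (real n * d)"
      proof -
        have "\<bar>(apply_bcontfun x 0 - apply_bcontfun y 0) * (- Sx)\<bar> \<le> d * (real n * R)"
          unfolding abs_mult abs_minus_cancel by (intro mult_mono cd Sx) (auto simp: d0)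
        moreover have "\<bar>apply_bcontfun y 0 * (Sy - Sx)\<bar> \<le> R * (real n * d)"
          unfolding abs_mult abs_minus_commute[of Sy] by (intro mult_mono cy Sxy) (auto simp: R)
        ultimately show ?thesis
          using abs_triangle_ineq[of "(apply_bcontfun x 0 - apply_bcontfun y 0) * (- Sx)" "apply_bcontfun y 0 * (Sy - Sx)"] by linarith
      qed
      finally have c0: "\<bar>apply_bcontfun (Fv n k cb x - Fv n k cb y) i\<bar> \<le> d * (real n * R) + R * (real n * d)" .
      have "0 \<le> (k / real n + 2 * R) * d" using kn R d0 by simp
      moreover have "(2 * real n * R + k / real n + 2 * R) * d = d * (real n * R) + R * (real n * d) + (k / real n + 2 * R) * d"
        by (simp add: ring_distribs mult_ac)
      ultimately show ?thesis using c0 unfolding real_norm_def by linarith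
    next
      case False
      define a where "a = apply_bcontfun x i" define b where "b = apply_bcontfun y i"
      have "apply_bcontfun (Fv n k cb x - Fv n k cb y) i
          = k / real n * (apply_bcontfun x 0 - apply_bcontfun y 0) - (a + b) * (a - b)"
        using False iT by (simp add: Fv_def fld_def a_def b_def algebra_simps)
      also have "\<bar>\<dots>\<bar> \<le> k / real n * d + (2 * R) * d"
      proof -
        have f1: "\<bar>k / real n * (apply_bcontfun x 0 - apply_bcontfun y 0)\<bar> \<le> k / real n * d"
          unfolding abs_mult abs_of_nonneg[OF kn] by (rule mult_left_mono[OF cd[of 0] kn])
        have f2: "\<bar>(a + b) * (a - b)\<bar> \<le> (2 * R) * d"
          unfolding abs_mult using cx[of i] cy[of i] cd[of i] d0
          by (intro mult_mono) (auto simp: a_def b_def)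
        show ?thesis by (rule order_trans[OF abs_triangle_ineq4 add_mono[OF f1 f2]])
      qed
      finally have c0: "\<bar>apply_bcontfun (Fv n k cb x - Fv n k cb y) i\<bar> \<le> k / real n * d + (2 * R) * d" .
      have "0 \<le> (2 * real n * R) * d" using R d0 by simp
      moreover have "(2 * real n * R + k / real n + 2 * R) * d = (2 * real n * R) * d + (k / real n * d + (2 * R) * d)"
        by (simp add: ring_distribs mult_ac)
      ultimately show ?thesis using c0 unfolding real_norm_def by linarith
    qed
  qed
qed

lemma Fv_bnd:
  assumes x: "norm x \<le> R" and R: "0 \<le> R" and k: "0 \<le> k" and cb: "0 \<le> cb"
  shows "norm (Fv n k cb x) \<le> real n * R * R + k / real n * (R + cb) + R * R"
proof (rule norm_bound)
  fix i
  have cx: "\<bar>apply_bcontfun x j\<bar> \<le> R" for j using comp_le_norm[of x j] x by linarith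
  have kn: "0 \<le> k / real n" using k by simp
  have tot: "0 \<le> real n * R * R + k / real n * (R + cb) + R * R" using R kn cb by (intro add_nonneg_nonneg mult_nonneg_nonneg) auto
  show "norm (apply_bcontfun (Fv n k cb x) i) \<le> real n * R * R + k / real n * (R + cb) + R * R"
  proof (cases "i \<le> n")
    case False
    then show ?thesis using tot by (simp add: Fv_def)
  next
    case iT: True
    show ?thesis
    proof (cases "i = 0")
      case True
      have Sx: "\<bar>\<Sum>j=1..n. apply_bcontfun x j\<bar> \<le> real n * R" by (rule sum_abs_le_card) (use cx in auto)
      have "\<bar>apply_bcontfun x 0 * (\<Sum>j=1..n. apply_bcontfun x j)\<bar> \<le> R * (real n * R)"
        unfolding abs_mult by (intro mult_mono cx Sx) (auto simp: R)
      moreover have "apply_bcontfun (Fv n k cb x) i = - (apply_bcontfun x 0 * (\<Sum>j=1..n. apply_bcontfun x j))"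
        using True by (simp add: Fv_def fld_def)
      moreover have "0 \<le> k / real n * (R + cb) + R * R" using kn cb R by (intro add_nonneg_nonneg mult_nonneg_nonneg) auto
      ultimately show ?thesis unfolding real_norm_def by (simp add: mult_ac)
    next
      case False
      have f1: "\<bar>k / real n * (apply_bcontfun x 0 - cb)\<bar> \<le> k / real n * (R + cb)"
        unfolding abs_mult abs_of_nonneg[OF kn] by (rule mult_left_mono) (use cx[of 0] cb kn in auto)
      have f2: "\<bar>apply_bcontfun x i * apply_bcontfun x i\<bar> \<le> R * R"
        unfolding abs_mult using cx[of i] by (intro mult_mono) auto
      have e: "apply_bcontfun (Fv n k cb x) i = k / real n * (apply_bcontfun x 0 - cb) - apply_bcontfun x i * apply_bcontfun x i"
        using False iT by (simp add: Fv_def fld_def)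
      have "0 \<le> real n * R * R" using R by simp
      moreover have "\<bar>apply_bcontfun (Fv n k cb x) i\<bar> \<le> k / real n * (R + cb) + R * R"
        unfolding e by (rule order_trans[OF abs_triangle_ineq4 add_mono[OF f1 f2]])
      ultimately show ?thesis unfolding real_norm_def by linarith
    qed
  qed
qed


lemma glue:
  fixes w v :: "nat \<Rightarrow> real \<Rightarrow> real" and \<Phi> :: "(nat \<Rightarrow> real) \<Rightarrow> nat \<Rightarrow> real"
  assumes t0: "0 \<le> t0" "t0 < tB" "tB < T'"
    and dw: "\<And>t j. t \<in> {0..<tB} \<Longrightarrow> j \<in> J \<Longrightarrow> (w j has_real_derivative \<Phi> (\<lambda>i. w i t) j) (at t within {0..<tB})"
    and dv: "\<And>t j. t \<in> {t0..T'} \<Longrightarrow> j \<in> J \<Longrightarrow> (v j has_real_derivative \<Phi> (\<lambda>i. v i t) j) (at t within {t0..T'})"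
    and eq: "\<And>i. v i t0 = w i t0"
    and t: "t \<in> {0..<T'}" and j: "j \<in> J"
  shows "((\<lambda>s. if s \<le> t0 then w j s else v j s) has_real_derivative \<Phi> (\<lambda>i. if t \<le> t0 then w i t else v i t) j) (at t within {0..<T'})"
proof -
  consider "t < t0" | "t = t0" | "t0 < t" by linarith
  then show ?thesis
  proof cases
    case 1
    have "at t within {0..<tB} = at t within {0..<T'}"
      by (rule at_within_nhd[of t "{..<t0}"]) (use 1 t0 in auto)
    with dw[of t j] 1 t t0 j have d: "(w j has_real_derivative \<Phi> (\<lambda>i. w i t) j) (at t within {0..<T'})" by auto
    have "((\<lambda>s. if s \<le> t0 then w j s else v j s) has_real_derivative \<Phi> (\<lambda>i. w i t) j) (at t within {0..<T'})"
      by (rule has_field_derivative_transform_within[OF d, of "t0 - t"]) (use 1 t in \<open>auto simp: dist_real_def\<close>)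
    then show ?thesis using 1 by simp
  next
    case 2
    have dl: "(w j has_real_derivative \<Phi> (\<lambda>i. w i t0) j) (at t0 within {0..t0})"
      by (rule has_field_derivative_subset[OF dw]) (use t0 j in auto)
    have dl': "((\<lambda>s. if s \<le> t0 then w j s else v j s) has_real_derivative \<Phi> (\<lambda>i. w i t0) j) (at t0 within {0..t0})"
      by (rule has_field_derivative_transform_within[OF dl, of 1]) (use t0 in auto)
    have ev: "(\<lambda>i. v i t0) = (\<lambda>i. w i t0)" using eq by auto
    have dr: "(v j has_real_derivative \<Phi> (\<lambda>i. w i t0) j) (at t0 within {t0..<T'})"
      by (rule has_field_derivative_subset[OF dv[of t0 j, unfolded ev]]) (use t0 j in auto)
    have dr': "((\<lambda>s. if s \<le> t0 then w j s else v j s) has_real_derivative \<Phi> (\<lambda>i. w i t0) j) (at t0 within {t0..<T'})"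
      by (rule has_field_derivative_transform_within[OF dr, of 1]) (use t0 eq in auto)
    have U: "{0..<T'} = {0..t0} \<union> {t0..<T'}" using t0 by auto
    have "((\<lambda>s. if s \<le> t0 then w j s else v j s) has_real_derivative \<Phi> (\<lambda>i. w i t0) j) (at t0 within {0..<T'})"
      using dl' dr' unfolding has_field_derivative_iff U by (rule Lim_Un)
    then show ?thesis using 2 by simp
  next
    case 3
    have d1: "(v j has_real_derivative \<Phi> (\<lambda>i. v i t) j) (at t within {t0..<T'})"
      by (rule has_field_derivative_subset[OF dv]) (use 3 t j in auto)
    have "at t within {t0..<T'} = at t within {0..<T'}"
      by (rule at_within_nhd[of t "{t0<..}"]) (use 3 t0 in auto)
    with d1 have d: "(v j has_real_derivative \<Phi> (\<lambda>i. v i t) j) (at t within {0..<T'})" by simp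
    have "((\<lambda>s. if s \<le> t0 then w j s else v j s) has_real_derivative \<Phi> (\<lambda>i. v i t) j) (at t within {0..<T'})"
      by (rule has_field_derivative_transform_within[OF d, of "t - t0"]) (use 3 t in \<open>auto simp: dist_real_def\<close>)
    then show ?thesis using 3 by simp
  qed
qed

lemma extend_bounded:
  assumes sol: "is_solution n k cb rho0 lam0 tB lam rho" and tB: "0 < tB" and k: "0 \<le> k" and cb: "0 \<le> cb"
    and bl: "\<And>t i. t \<in> {0..<tB} \<Longrightarrow> i \<in> {1..n} \<Longrightarrow> \<bar>lam i t\<bar> \<le> B"
    and br: "\<And>t. t \<in> {0..<tB} \<Longrightarrow> \<bar>rho t\<bar> \<le> B"
  shows "\<exists>T'>tB. \<exists>lam' rho'. is_solution n k cb rho0 lam0 T' lam' rho'"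
proof -
  define w where "w j t = (if j \<le> n then (if j = 0 then rho t else lam j t) else 0)" for j t
  have B0: "0 \<le> B" using br[of 0] tB by auto
  define Y where "Y t = mkv n (\<lambda>j. w j t)" for t
  have nY: "norm (Y t) \<le> B" if t: "t \<in> {0..<tB}" for t
  proof (rule norm_bound)
    fix j
    show "norm (apply_bcontfun (Y t) j) \<le> B"
      using bl[OF t, of j] br[OF t] B0 by (auto simp: Y_def w_def)
  qed
  define R where "R = B + 1"
  define Lc where "Lc = 2 * real n * R + k / real n + 2 * R"
  define Mc where "Mc = real n * R * R + k / real n * (R + cb) + R * R"
  have R0: "0 \<le> R" using B0 by (simp add: R_def)
  have Lc0: "0 \<le> Lc" using R0 k by (simp add: Lc_def)
  have Mc0: "0 \<le> Mc" using R0 k cb unfolding Mc_def by (intro add_nonneg_nonneg mult_nonneg_nonneg) auto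
  define h where "h = 1 / (Lc + Mc + 1)"
  have h0: "0 < h" using Lc0 Mc0 by (simp add: h_def)
  have hM: "h * Mc \<le> 1" using Lc0 Mc0 by (simp add: h_def field_simps)
  have hL: "h * Lc < 1" using Lc0 Mc0 by (simp add: h_def field_simps)
  define t0 where "t0 = max 0 (tB - h / 2)"
  have t0: "0 \<le> t0" "t0 < tB" "tB < t0 + h" using h0 tB by (auto simp: t0_def)
  have inR: "norm x \<le> R" if "x \<in> cball (Y t0) 1" for x
  proof -
    have "norm x \<le> norm (Y t0) + norm (x - Y t0)" by (rule norm_triangle_sub)
    also have "\<dots> \<le> B + 1" using nY[of t0] t0 that by (intro add_mono) (auto simp: dist_norm norm_minus_commute)
    finally show ?thesis by (simp add: R_def)
  qed
  have lipF: "norm (Fv n k cb x - Fv n k cb y) \<le> Lc * norm (x - y)"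
    if "x \<in> cball (Y t0) 1" "y \<in> cball (Y t0) 1" for x y
    unfolding Lc_def by (rule Fv_lip[OF inR[OF that(1)] inR[OF that(2)] R0 k])
  have bndF: "norm (Fv n k cb x) \<le> Mc" if "x \<in> cball (Y t0) 1" for x
    unfolding Mc_def by (rule Fv_bnd[OF inR[OF that] R0 k cb])
  have one: "(0::real) < 1" by simp
  from picard_local[OF one h0 Lc0 lipF bndF] hM hL
  obtain z where z0: "z t0 = Y t0"
    and zd: "\<forall>t\<in>{t0..t0+h}. (z has_vector_derivative Fv n k cb (z t)) (at t within {t0..t0+h})"
    by blast
  define v where "v j t = apply_bcontfun (z t) j" for j t
  define T' where "T' = t0 + h"
  have dv: "(v j has_real_derivative fld n k cb (\<lambda>i. v i t) j) (at t within {t0..T'})"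
    if "t \<in> {t0..T'}" "j \<in> {0..n}" for t j
  proof -
    have "(v j has_real_derivative apply_bcontfun (Fv n k cb (z t)) j) (at t within {t0..T'})"
      unfolding v_def using comp_vd[OF zd[rule_format, of t]] that by (simp add: T'_def)
    then show ?thesis using that by (simp add: Fv_def v_def)
  qed
  have dw: "(w j has_real_derivative fld n k cb (\<lambda>i. w i t) j) (at t within {0..<tB})"
    if t: "t \<in> {0..<tB}" and j: "j \<in> {0..n}" for t j
  proof (cases "j = 0")
    case True
    have e: "w 0 = rho" by (auto simp: w_def)
    have s: "(\<Sum>i=1..n. w i t) = (\<Sum>i=1..n. lam i t)" by (rule sum.cong) (auto simp: w_def)
    have f: "fld n k cb (\<lambda>i. w i t) 0 = - rho t * (\<Sum>i=1..n. lam i t)"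
      unfolding fld_def s by (simp add: w_def)
    have "(rho has_real_derivative - rho t * (\<Sum>i=1..n. lam i t)) (at t within {0..<tB})"
      using sol t unfolding is_solution_def by blast
    then show ?thesis unfolding True e f .
  next
    case False
    have e: "w j = lam j" using False j by (auto simp: w_def)
    have "w 0 t = rho t" by (simp add: w_def)
    then show ?thesis using sol t j False unfolding is_solution_def e by (simp add: fld_def e)
  qed
  have eq: "v i t0 = w i t0" for i by (simp add: v_def z0 Y_def w_def)
  define w' where "w' j s = (if s \<le> t0 then w j s else v j s)" for j s
  have dw': "(w' j has_real_derivative fld n k cb (\<lambda>i. w' i t) j) (at t within {0..<T'})"
    if "t \<in> {0..<T'}" "j \<in> {0..n}" for t j
    unfolding w'_def
    by (rule glue[where J = "{0..n}", OF t0(1,2) _ dw dv eq that]) (use t0 in \<open>auto simp: T'_def\<close>)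
  have sol': "is_solution n k cb rho0 lam0 T' w' (w' 0)"
    unfolding is_solution_def
  proof (intro conjI ballI)
    fix t i assume t: "t \<in> {0..<T'}" and i: "i \<in> {1..n}"
    show "(w' i has_real_derivative k / real n * (w' 0 t - cb) - w' i t * w' i t) (at t within {0..<T'})"
      using dw'[OF t, of i] i by (simp add: fld_def)
  next
    fix t assume t: "t \<in> {0..<T'}"
    show "(w' 0 has_real_derivative - w' 0 t * (\<Sum>i=1..n. w' i t)) (at t within {0..<T'})"
      using dw'[OF t, of 0] by (simp add: fld_def)
  next
    show "w' 0 0 = rho0" using sol t0 by (simp add: w'_def w_def is_solution_def)
  next
    fix i assume i: "i \<in> {1..n}"
    show "w' i 0 = lam0 i" using sol t0 i by (simp add: w'_def w_def is_solution_def)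
  qed
  show ?thesis using sol' t0 by (auto simp: T'_def)
qed


locale sys =
  fixes n :: nat and k cb rho0 :: real and lam0 :: "nat \<Rightarrow> real" and tB :: real
    and lam :: "nat \<Rightarrow> real \<Rightarrow> real" and rho :: "real \<Rightarrow> real"
  assumes n: "n \<ge> 2" and k: "k > 0" and cb: "cb > 0" and rho0: "rho0 > 0"
    and lam0_12: "lam0 1 < lam0 2" and lam0_mono: "\<forall>i\<in>{2..<n}. lam0 i \<le> lam0 (i + 1)"
    and sol: "is_solution n k cb rho0 lam0 tB lam rho" and tB: "0 < tB"
begin

definition I where "I i t = integral {0..t} (lam i)"
definition U where "U i t = exp (I i t)"
definition a where "a t = k / real n * (rho t - cb)"

lemma at_int: "t \<in> {0<..<tB} \<Longrightarrow> at t within {0..<tB} = at t"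
  by (rule at_within_open_subset[of t "{0<..<tB}"]) auto

lemma lam_dw: "t \<in> {0..<tB} \<Longrightarrow> i \<in> {1..n} \<Longrightarrow>
    (lam i has_real_derivative (a t - lam i t * lam i t)) (at t within {0..<tB})"
  using sol unfolding is_solution_def a_def by blast

lemma rho_dw: "t \<in> {0..<tB} \<Longrightarrow>
    (rho has_real_derivative (- rho t * (\<Sum>i=1..n. lam i t))) (at t within {0..<tB})"
  using sol unfolding is_solution_def by blast

lemma lam_d: "t \<in> {0<..<tB} \<Longrightarrow> i \<in> {1..n} \<Longrightarrow> (lam i has_real_derivative (a t - lam i t * lam i t)) (at t)"
  using lam_dw[of t i] at_int[of t] by auto

lemma rho_d: "t \<in> {0<..<tB} \<Longrightarrow> (rho has_real_derivative (- rho t * (\<Sum>i=1..n. lam i t))) (at t)"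
  using rho_dw[of t] at_int[of t] by auto

lemma lam_cont: "i \<in> {1..n} \<Longrightarrow> continuous_on {0..<tB} (lam i)"
  unfolding continuous_on_eq_continuous_within using lam_dw DERIV_continuous by blast

lemma rho_cont: "continuous_on {0..<tB} rho"
  unfolding continuous_on_eq_continuous_within using rho_dw DERIV_continuous by blast

lemma lam_0: "i \<in> {1..n} \<Longrightarrow> lam i 0 = lam0 i" using sol unfolding is_solution_def by blast
lemma rho_0: "rho 0 = rho0" using sol unfolding is_solution_def by blast

lemma loc: "x \<in> {0..<tB} \<Longrightarrow> x < b \<Longrightarrow> b < tB \<Longrightarrow> at x within {0..<tB} = at x within {0..b}"
  by (rule at_within_nhd[of x "{..<b}"]) auto

lemma I_dw: assumes t: "t \<in> {0..<tB}" and i: "i \<in> {1..n}"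
  shows "(I i has_real_derivative lam i t) (at t within {0..<tB})"
proof -
  define b where "b = (t + tB) / 2"
  have b: "t < b" "b < tB" using t by (auto simp: b_def)
  have "continuous_on {0..b} (lam i)" by (rule continuous_on_subset[OF lam_cont[OF i]]) (use b in auto)
  then have "((\<lambda>u. integral {0..u} (lam i)) has_vector_derivative lam i t) (at t within {0..b})"
    by (rule integral_has_vector_derivative) (use t b in auto)
  then show ?thesis
    unfolding has_real_derivative_iff_has_vector_derivative loc[OF t b] I_def[abs_def] .
qed

lemma I_d: "t \<in> {0<..<tB} \<Longrightarrow> i \<in> {1..n} \<Longrightarrow> (I i has_real_derivative lam i t) (at t)"
  using I_dw[of t i] at_int[of t] by auto

lemma I_cont: "i \<in> {1..n} \<Longrightarrow> continuous_on {0..<tB} (I i)"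
  unfolding continuous_on_eq_continuous_within using I_dw DERIV_continuous by blast

lemma I_0[simp]: "I i 0 = 0" by (simp add: I_def)
lemma U_0[simp]: "U i 0 = 1" by (simp add: U_def)
lemma U_pos: "U i t > 0" by (simp add: U_def)

lemma U_d: "t \<in> {0<..<tB} \<Longrightarrow> i \<in> {1..n} \<Longrightarrow> (U i has_real_derivative lam i t * U i t) (at t)"
  unfolding U_def[abs_def] using DERIV_fun_exp[OF I_d, of t i] by (simp add: mult.commute)

lemma U_cont: "i \<in> {1..n} \<Longrightarrow> continuous_on {0..<tB} (U i)"
  unfolding U_def[abs_def] by (intro continuous_on_exp I_cont)

lemma deriv_U: "t \<in> {0<..<tB} \<Longrightarrow> i \<in> {1..n} \<Longrightarrow> deriv (U i) t = lam i t * U i t"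
  using U_d by (rule DERIV_imp_deriv)

lemma D_d: assumes "t \<in> {0<..<tB}" "i \<in> {1..n}"
  shows "((\<lambda>s. lam i s * U i s) has_real_derivative a t * U i t) (at t)"
proof -
  from DERIV_mult[OF lam_d[OF assms] U_d[OF assms]]
  show ?thesis by (rule DERIV_cong) (simp add: algebra_simps)
qed

lemma const_on:
  fixes g :: "real \<Rightarrow> real"
  assumes "continuous_on {0..<tB} g" "\<And>t. t \<in> {0<..<tB} \<Longrightarrow> (g has_real_derivative 0) (at t)"
    and "t \<in> {0..<tB}"
  shows "g t = g 0"
proof (cases "t = 0")
  case False
  then have t: "0 < t" "t < tB" using assms(3) by auto
  show ?thesis
  proof (rule DERIV_isconst_end[OF t(1)])
    show "continuous_on {0..t} g" by (rule continuous_on_subset[OF assms(1)]) (use t in auto)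
    show "\<And>x. 0 < x \<Longrightarrow> x < t \<Longrightarrow> DERIV g x :> 0" using assms(2) t by auto
  qed
qed simp

lemma wr:
  assumes i: "i \<in> {1..n}" and j: "j \<in> {1..n}" and t: "t \<in> {0..<tB}"
  shows "U i t * U j t * (lam j t - lam i t) = lam0 j - lam0 i"
proof -
  define g where "g s = U i s * U j s * (lam j s - lam i s)" for s
  have "g t = g 0"
  proof (rule const_on[OF _ _ t])
    show "continuous_on {0..<tB} g" unfolding g_def
      using U_cont[OF i] U_cont[OF j] lam_cont[OF i] lam_cont[OF j] by (intro continuous_intros)
    fix s assume s: "s \<in> {0<..<tB}"
    from DERIV_mult[OF DERIV_mult[OF U_d[OF s i] U_d[OF s j]] DERIV_diff[OF lam_d[OF s j] lam_d[OF s i]]]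
    show "(g has_real_derivative 0) (at s)"
      unfolding g_def[abs_def] by (rule DERIV_cong) (simp add: algebra_simps)
  qed
  then show ?thesis using lam_0[OF i] lam_0[OF j] by (simp add: g_def)
qed

lemma rho_eq:
  assumes t: "t \<in> {0..<tB}"
  shows "rho t * exp (\<Sum>j=1..n. I j t) = rho0"
proof -
  define g where "g s = rho s * exp (\<Sum>j=1..n. I j s)" for s
  have "g t = g 0"
  proof (rule const_on[OF _ _ t])
    show "continuous_on {0..<tB} g" unfolding g_def
      using rho_cont I_cont by (intro continuous_intros) auto
    fix s assume s: "s \<in> {0<..<tB}"
    have "((\<lambda>s. \<Sum>j=1..n. I j s) has_real_derivative (\<Sum>j=1..n. lam j s)) (at s)"
      by (rule DERIV_sum) (use I_d s in auto)
    from DERIV_mult[OF rho_d[OF s] DERIV_fun_exp[OF this]]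
    show "(g has_real_derivative 0) (at s)"
      unfolding g_def[abs_def] by (rule DERIV_cong) (simp add: algebra_simps)
  qed
  then show ?thesis using rho_0 by (simp add: g_def)
qed

lemma prodU: "(\<Prod>j=1..n. U j t) = exp (\<Sum>j=1..n. I j t)"
  by (simp add: U_def exp_sum)

lemma rho_prod: "t \<in> {0..<tB} \<Longrightarrow> rho t = rho0 / (\<Prod>j=1..n. U j t)"
  unfolding prodU using rho_eq[of t] by (simp add: eq_divide_eq)

lemma rho_pos: "t \<in> {0..<tB} \<Longrightarrow> rho t > 0"
  using rho_prod[of t] rho0 by (simp add: U_pos prod_pos)

end


lemma dec_on:
  fixes g :: "real \<Rightarrow> real"
  assumes "continuous_on {c..<d} g" "\<And>x. c < x \<Longrightarrow> x < d \<Longrightarrow> \<exists>y. DERIV g x :> y \<and> y \<le> 0"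
    "c \<le> s" "s \<le> t" "t < d"
  shows "g t \<le> g s"
proof (rule DERIV_nonpos_imp_decreasing_open[OF assms(4)])
  show "\<And>x. s < x \<Longrightarrow> x < t \<Longrightarrow> \<exists>y. DERIV g x :> y \<and> y \<le> 0" using assms by auto
  show "continuous_on {s..t} g" by (rule continuous_on_subset[OF assms(1)]) (use assms in auto)
qed

lemma inc_on:
  fixes g :: "real \<Rightarrow> real"
  assumes "continuous_on {c..<d} g" "\<And>x. c < x \<Longrightarrow> x < d \<Longrightarrow> \<exists>y. DERIV g x :> y \<and> y \<ge> 0"
    "c \<le> s" "s \<le> t" "t < d"
  shows "g s \<le> g t"
proof (rule DERIV_nonneg_imp_increasing_open[OF assms(4)])
  show "\<And>x. s < x \<Longrightarrow> x < t \<Longrightarrow> \<exists>y. DERIV g x :> y \<and> y \<ge> 0" using assms by auto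
  show "continuous_on {s..t} g" by (rule continuous_on_subset[OF assms(1)]) (use assms in auto)
qed

lemma ev_ex:
  fixes tB :: real
  assumes "eventually P (at_left tB)" "0 < tB"
  shows "\<exists>t1. 0 < t1 \<and> t1 < tB \<and> (\<forall>t. t1 \<le> t \<and> t < tB \<longrightarrow> P t)"
proof -
  obtain b where b: "b < tB" "\<forall>y>b. y < tB \<longrightarrow> P y" using assms(1) unfolding eventually_at_left_field by blast
  define t1 where "t1 = max ((b + tB) / 2) (tB / 2)"
  show ?thesis by (rule exI[of _ t1]) (use b assms(2) in \<open>auto simp: t1_def\<close>)
qed

context sys begin

lemma lam0_up: "2 \<le> i \<Longrightarrow> i + m \<le> n \<Longrightarrow> lam0 i \<le> lam0 (i + m)"
proof (induction m)
  case (Suc m)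
  then have "lam0 (i + m) \<le> lam0 (i + m + 1)" using lam0_mono by auto
  with Suc show ?case by simp
qed simp

lemma lam0_ord: assumes "i \<in> {1..n}" shows "lam0 1 \<le> lam0 i" "lam0 i \<le> lam0 n"
proof -
  have n2: "lam0 2 \<le> lam0 n"
  proof -
    have "lam0 2 \<le> lam0 (2 + (n - 2))" by (rule lam0_up) (use n in auto)
    moreover have "2 + (n - 2) = n" using n by auto
    ultimately show ?thesis by simp
  qed
  show "lam0 1 \<le> lam0 i"
  proof (cases "i = 1")
    case False
    have "lam0 2 \<le> lam0 (2 + (i - 2))" by (rule lam0_up) (use assms False in auto)
    moreover have "2 + (i - 2) = i" using assms False by auto
    ultimately show ?thesis using lam0_12 by simp
  qed simp
  show "lam0 i \<le> lam0 n"
  proof (cases "i = 1")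
    case False
    have "lam0 i \<le> lam0 (i + (n - i))" by (rule lam0_up) (use assms False in auto)
    moreover have "i + (n - i) = n" using assms by auto
    ultimately show ?thesis by simp
  qed (use n2 lam0_12 in simp)
qed

lemma lam0_2: assumes "i \<in> {2..n}" shows "lam0 1 < lam0 i"
proof -
  have "lam0 2 \<le> lam0 (2 + (i - 2))" by (rule lam0_up) (use assms in auto)
  moreover have "2 + (i - 2) = i" using assms by auto
  ultimately show ?thesis using lam0_12 by simp
qed

lemma W_pos: "lam0 1 < lam0 n" using lam0_2[of n] n by auto

lemma lam_ord: assumes t: "t \<in> {0..<tB}" and i: "i \<in> {1..n}"
  shows "lam 1 t \<le> lam i t" "lam i t \<le> lam n t"
proof -
  have 1: "1 \<in> {1..n}" and nn: "n \<in> {1..n}" using n by auto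
  have "U 1 t * U i t * (lam i t - lam 1 t) \<ge> 0" using wr[OF 1 i t] lam0_ord[OF i] by simp
  moreover have "U 1 t * U i t > 0" by (simp add: U_pos)
  ultimately show "lam 1 t \<le> lam i t" by (simp add: zero_le_mult_iff)
  have "U i t * U n t * (lam n t - lam i t) \<ge> 0" using wr[OF i nn t] lam0_ord[OF i] by simp
  moreover have "U i t * U n t > 0" by (simp add: U_pos)
  ultimately show "lam i t \<le> lam n t" by (simp add: zero_le_mult_iff)
qed

lemma decomp: assumes t: "t \<in> {0..<tB}" and i: "i \<in> {1..n}"
  shows "(lam0 n - lam0 1) * U i t = (lam0 i - lam0 1) * U n t + (lam0 n - lam0 i) * U 1 t"
proof -
  have 1: "1 \<in> {1..n}" and nn: "n \<in> {1..n}" using n by auto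
  have e1: "lam0 i - lam0 1 = U 1 t * U i t * (lam i t - lam 1 t)" using wr[OF 1 i t] by simp
  have e2: "lam0 n - lam0 i = U i t * U n t * (lam n t - lam i t)" using wr[OF i nn t] by simp
  have e3: "lam0 n - lam0 1 = U 1 t * U n t * (lam n t - lam 1 t)" using wr[OF 1 nn t] by simp
  show ?thesis unfolding e1 e2 e3 by (simp add: algebra_simps)
qed

lemma I_bound: assumes t: "t \<in> {0..<tB}" and j: "j \<in> {1..n}" and B: "\<And>s. s \<in> {0..<tB} \<Longrightarrow> \<bar>lam j s\<bar> \<le> B"
  shows "\<bar>I j t\<bar> \<le> B * tB"
proof -
  have "norm (integral {0..t} (lam j)) \<le> B * (t - 0)"
  proof (rule integral_bound)
    show "continuous_on {0..t} (lam j)" by (rule continuous_on_subset[OF lam_cont[OF j]]) (use t in auto)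
  qed (use t B in auto)
  moreover have "B * t \<le> B * tB" using t B[of 0] tB by (intro mult_left_mono) auto
  ultimately show ?thesis by (simp add: I_def)
qed

end

locale sys2 = sys +
  fixes p q :: real
  assumes maxi: "\<not> (\<exists>T'>tB. \<exists>lam' rho'. is_solution n k cb rho0 lam0 T' lam' rho')"
    and lim1: "((\<lambda>t. lam 1 t * U 1 t * U n t) \<longlongrightarrow> - p) (at_left tB)"
    and limn: "((\<lambda>t. U 1 t * (lam n t * U n t)) \<longlongrightarrow> q) (at_left tB)"
    and pq: "p > q"
    and xi1: "(- p / (p - q))^2 + (- p / (p - q)) = 0"
begin

definition P where "P t = U 1 t * U n t"

lemma P_pos: "P t > 0" by (simp add: P_def U_pos)

lemma ev0: "eventually (\<lambda>t. t \<in> {0<..<tB}) (at_left tB)"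
  unfolding eventually_at_left_field using tB by (intro exI[of _ 0]) auto

lemma pq_sum: "q + p = lam0 n - lam0 1"
proof -
  have 1: "1 \<in> {1..n}" and nn: "n \<in> {1..n}" using n by auto
  have e: "eventually (\<lambda>t. U 1 t * (lam n t * U n t) - lam 1 t * U 1 t * U n t = lam0 n - lam0 1) (at_left tB)"
    using ev0 by eventually_elim (use wr[OF 1 nn] in \<open>auto simp: algebra_simps\<close>)
  have l: "((\<lambda>t. U 1 t * (lam n t * U n t) - lam 1 t * U 1 t * U n t) \<longlongrightarrow> q - - p) (at_left tB)"
    by (rule tendsto_diff[OF limn lim1])
  have "((\<lambda>t. lam0 n - lam0 1) \<longlongrightarrow> q - - p) (at_left tB)"
    by (rule Lim_transform_eventually[OF l e])
  then show ?thesis by (simp add: tendsto_const_iff)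
qed

lemma q0: "q = 0"
proof -
  define x where "x = - p / (p - q)"
  have "x * (x + 1) = 0" using xi1 by (simp add: x_def power2_eq_square algebra_simps)
  then have "x = 0 \<or> x = -1" by auto
  then have "p = 0 \<or> q = 0" using pq by (auto simp: x_def field_simps)
  moreover have "p \<noteq> 0" using pq_sum W_pos pq by auto
  ultimately show ?thesis by auto
qed

lemma p_eq: "p = lam0 n - lam0 1" using pq_sum q0 by simp
lemma ppos: "p > 0" using p_eq W_pos by simp

lemma L1: "((\<lambda>t. lam 1 t * P t) \<longlongrightarrow> - p) (at_left tB)"
  using lim1 by (simp add: P_def mult.assoc)

lemma Ln: "((\<lambda>t. lam n t * P t) \<longlongrightarrow> 0) (at_left tB)"
  using limn q0 by (simp add: P_def mult_ac)

lemma P_d: "t \<in> {0<..<tB} \<Longrightarrow> (P has_real_derivative lam 1 t * P t + lam n t * P t) (at t)"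
proof -
  assume t: "t \<in> {0<..<tB}"
  have 1: "1 \<in> {1..n}" and nn: "n \<in> {1..n}" using n by auto
  from DERIV_mult[OF U_d[OF t 1] U_d[OF t nn]]
  show ?thesis unfolding P_def[abs_def] by (rule DERIV_cong) (simp add: algebra_simps)
qed

lemma P_cont: "continuous_on {0..<tB} P"
proof -
  have 1: "1 \<in> {1..n}" and nn: "n \<in> {1..n}" using n by auto
  show ?thesis unfolding P_def[abs_def] using U_cont[OF 1] U_cont[OF nn] by (intro continuous_intros)
qed

end


context sys2 begin

lemma one_in: "1 \<in> {1..n}" and n_in: "n \<in> {1..n}" using n by auto

lemma P_lim0: "(P \<longlongrightarrow> 0) (at_left tB)"
proof -
  have "((\<lambda>t. lam 1 t * P t + lam n t * P t) \<longlongrightarrow> - p + 0) (at_left tB)"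
    by (rule tendsto_add[OF L1 Ln])
  then have "eventually (\<lambda>t. lam 1 t * P t + lam n t * P t < - p / 2) (at_left tB)"
    by (rule order_tendstoD(2)) (use ppos in simp)
  then have "eventually (\<lambda>t. lam 1 t * P t + lam n t * P t < - p / 2 \<and> t \<in> {0<..<tB}) (at_left tB)"
    using ev0 by eventually_elim auto
  then obtain t1 where t1: "0 < t1" "t1 < tB"
    and t1P: "\<And>t. t1 \<le> t \<Longrightarrow> t < tB \<Longrightarrow> lam 1 t * P t + lam n t * P t < - p / 2 \<and> t \<in> {0<..<tB}"
    using ev_ex[OF _ tB] by blast
  have dec: "P t \<le> P s" if "t1 \<le> s" "s \<le> t" "t < tB" for s t
  proof (rule dec_on[of t1 tB P s t])
    show "continuous_on {t1..<tB} P" by (rule continuous_on_subset[OF P_cont]) (use t1 in auto)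
    fix x assume x: "t1 < x" "x < tB"
    show "\<exists>y. DERIV P x :> y \<and> y \<le> 0"
      using P_d[of x] t1P[of x] x ppos by (intro exI[of _ "lam 1 x * P x + lam n x * P x"]) auto
  qed (use that in auto)
  show ?thesis
  proof (cases "\<exists>\<epsilon>>0. \<forall>s. t1 \<le> s \<and> s < tB \<longrightarrow> \<epsilon> \<le> P s")
    case False
    show ?thesis
    proof (rule tendstoI)
      fix e :: real assume e: "e > 0"
      from False e obtain s where s: "t1 \<le> s" "s < tB" "P s < e" by force
      show "eventually (\<lambda>t. dist (P t) 0 < e) (at_left tB)"
        unfolding eventually_at_left_field
      proof (intro exI[of _ s] conjI allI impI)
        fix y assume "y > s" "y < tB"
        then have "P y \<le> P s" using dec[of s y] s by auto
        then show "dist (P y) 0 < e" using s P_pos[of y] by (simp add: dist_real_def)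
      qed (use s in auto)
    qed
  next
    case True
    then obtain \<epsilon> where \<epsilon>: "\<epsilon> > 0" and Pe: "\<And>s. t1 \<le> s \<Longrightarrow> s < tB \<Longrightarrow> \<epsilon> \<le> P s" by blast
    have e1: "eventually (\<lambda>t. dist (lam 1 t * P t) (- p) < 1) (at_left tB)"
      using tendstoD[OF L1, of 1] by simp
    have e2: "eventually (\<lambda>t. dist (lam n t * P t) 0 < 1) (at_left tB)"
      using tendstoD[OF Ln, of 1] by simp
    from e1 e2 have "eventually (\<lambda>t. \<bar>lam 1 t * P t\<bar> < p + 1 \<and> \<bar>lam n t * P t\<bar> < 1) (at_left tB)"
    proof eventually_elim
      case (elim t)
      then have "\<bar>lam 1 t * P t + p\<bar> < 1" "\<bar>lam n t * P t\<bar> < 1" by (auto simp: dist_real_def)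
      moreover have "\<bar>lam 1 t * P t\<bar> \<le> \<bar>lam 1 t * P t + p\<bar> + p"
        using abs_triangle_ineq4[of "lam 1 t * P t + p" p] ppos by simp
      ultimately show ?case by linarith
    qed
    then obtain t2 where t2: "0 < t2" "t2 < tB"
      and t2P: "\<And>t. t2 \<le> t \<Longrightarrow> t < tB \<Longrightarrow> \<bar>lam 1 t * P t\<bar> < p + 1 \<and> \<bar>lam n t * P t\<bar> < 1"
      using ev_ex[OF _ tB] by blast
    define t3 where "t3 = max t1 t2"
    have t3: "0 < t3" "t3 < tB" using t1 t2 by (auto simp: t3_def)
    have c1: "continuous_on {0..t3} (lam 1)" by (rule continuous_on_subset[OF lam_cont[OF one_in]]) (use t3 in auto)
    have cn: "continuous_on {0..t3} (lam n)" by (rule continuous_on_subset[OF lam_cont[OF n_in]]) (use t3 in auto)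
    obtain B1 where B1: "B1 \<ge> 0" "\<And>x. x \<in> {0..t3} \<Longrightarrow> norm (lam 1 x) \<le> B1"
      using continuous_on_compact_bound[OF compact_Icc c1] by blast
    obtain Bn where Bn: "Bn \<ge> 0" "\<And>x. x \<in> {0..t3} \<Longrightarrow> norm (lam n x) \<le> Bn"
      using continuous_on_compact_bound[OF compact_Icc cn] by blast
    define B where "B = B1 + Bn + (p + 1) / \<epsilon> + 1 / \<epsilon>"
    have pe: "0 \<le> (p + 1) / \<epsilon>" "0 \<le> 1 / \<epsilon>" using ppos \<epsilon> by auto
    have late: "\<bar>lam 1 t\<bar> \<le> (p + 1) / \<epsilon> \<and> \<bar>lam n t\<bar> \<le> 1 / \<epsilon>" if "t3 \<le> t" "t < tB" for t
    proof -
      have Pt: "\<epsilon> \<le> P t" using Pe[of t] that by (simp add: t3_def)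
      have t2t: "t2 \<le> t" using that by (simp add: t3_def)
      have "\<bar>lam 1 t * P t\<bar> = \<bar>lam 1 t\<bar> * P t" "\<bar>lam n t * P t\<bar> = \<bar>lam n t\<bar> * P t"
        using P_pos[of t] by (simp_all add: abs_mult)
      then have a1: "\<bar>lam 1 t\<bar> * P t < p + 1" "\<bar>lam n t\<bar> * P t < 1"
        using t2P[OF t2t that(2)] by simp_all
      have "\<bar>lam 1 t\<bar> * \<epsilon> \<le> \<bar>lam 1 t\<bar> * P t" "\<bar>lam n t\<bar> * \<epsilon> \<le> \<bar>lam n t\<bar> * P t"
        using Pt by (auto intro: mult_left_mono)
      then have "\<bar>lam 1 t\<bar> * \<epsilon> \<le> p + 1" "\<bar>lam n t\<bar> * \<epsilon> \<le> 1" using a1 by auto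
      then show ?thesis using \<epsilon> by (simp add: pos_le_divide_eq)
    qed
    have b1n: "\<bar>lam 1 t\<bar> \<le> B \<and> \<bar>lam n t\<bar> \<le> B" if "t \<in> {0..<tB}" for t
    proof (cases "t \<le> t3")
      case True
      then have "\<bar>lam 1 t\<bar> \<le> B1" "\<bar>lam n t\<bar> \<le> Bn" using B1(2)[of t] Bn(2)[of t] that by auto
      then show ?thesis using B1(1) Bn(1) pe unfolding B_def by linarith
    next
      case False
      then have "\<bar>lam 1 t\<bar> \<le> (p + 1) / \<epsilon>" "\<bar>lam n t\<bar> \<le> 1 / \<epsilon>" using late[of t] that by auto
      then show ?thesis using B1(1) Bn(1) pe unfolding B_def by linarith
    qed
    have lb: "\<bar>lam i t\<bar> \<le> B" if "t \<in> {0..<tB}" "i \<in> {1..n}" for t i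
      using lam_ord[OF that] b1n[OF that(1)] unfolding abs_le_iff by linarith
    have B0: "0 \<le> B" using lb[of 0 1] tB one_in by (meson abs_ge_zero atLeastLessThan_iff order_trans order_refl)
    define C where "C = rho0 * exp (real n * (B * tB))"
    have rb: "\<bar>rho t\<bar> \<le> C" if t: "t \<in> {0..<tB}" for t
    proof -
      have "\<bar>\<Sum>j=1..n. I j t\<bar> \<le> real n * (B * tB)"
        by (rule sum_abs_le_card) (use I_bound[OF t _ lb] in auto)
      then have "exp (- (\<Sum>j=1..n. I j t)) \<le> exp (real n * (B * tB))" by simp
      moreover have "rho t = rho0 * exp (- (\<Sum>j=1..n. I j t))"
        using rho_eq[OF t] by (simp add: exp_minus field_simps)
      ultimately show ?thesis using rho_pos[OF t] rho0 by (simp add: C_def)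
    qed
    have "\<exists>T'>tB. \<exists>lam' rho'. is_solution n k cb rho0 lam0 T' lam' rho'"
    proof (rule extend_bounded[OF sol tB, where B = "B + C"])
      show "\<bar>lam i t\<bar> \<le> B + C" if "t \<in> {0..<tB}" "i \<in> {1..n}" for t i
        using lb[OF that] rb[OF that(1)] by auto
      show "\<bar>rho t\<bar> \<le> B + C" if "t \<in> {0..<tB}" for t
        using rb[OF that] B0 by auto
    qed (use k cb in auto)
    with maxi show ?thesis by blast
  qed
qed

end


lemma d_tau_powr: "t < tB \<Longrightarrow> ((\<lambda>s. (tB - s) powr c) has_real_derivative - c * (tB - t) powr (c - 1)) (at t)"
  for tB t c :: real
proof -
  assume t: "t < tB"
  have "((\<lambda>s. tB - s) has_real_derivative -1) (at t)" by (auto intro!: derivative_eq_intros)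
  from DERIV_fun_powr[OF this, of c] t show ?thesis by simp
qed

lemma d_tau_ln: "t < tB \<Longrightarrow> ((\<lambda>s. ln (tB - s)) has_real_derivative - 1 / (tB - t)) (at t)"
  for tB t :: real
proof -
  assume t: "t < tB"
  have "((\<lambda>s. tB - s) has_real_derivative -1) (at t)" by (auto intro!: derivative_eq_intros)
  from DERIV_chain2[OF DERIV_ln_divide this] t show ?thesis by simp
qed

context sys2 begin

lemma tau_lim: "((\<lambda>t. tB - t) \<longlongrightarrow> 0) (at_left tB)"
proof -
  have "((\<lambda>t. tB - t) \<longlongrightarrow> tB - tB) (at_left tB)"
    by (intro tendsto_intros)
  then show ?thesis by simp
qed

lemma Ptau: "((\<lambda>t. P t / (tB - t)) \<longlongrightarrow> p) (at_left tB)"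
proof (rule lhopital_left[where f' = "\<lambda>t. lam 1 t * P t + lam n t * P t" and g' = "\<lambda>t. -1"])
  show "(P \<longlongrightarrow> 0) (at_left tB)" by (rule P_lim0)
  show "((\<lambda>t. tB - t) \<longlongrightarrow> 0) (at_left tB)" by (rule tau_lim)
  show "eventually (\<lambda>t. tB - t \<noteq> 0) (at_left tB)" using ev0 by eventually_elim auto
  show "eventually (\<lambda>t. (-1::real) \<noteq> 0) (at_left tB)" by simp
  show "eventually (\<lambda>t. (P has_real_derivative lam 1 t * P t + lam n t * P t) (at t)) (at_left tB)"
    using ev0 by eventually_elim (rule P_d)
  show "eventually (\<lambda>t. ((\<lambda>t. tB - t) has_real_derivative -1) (at t)) (at_left tB)"
    by (intro always_eventually allI) (auto intro!: derivative_eq_intros)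
  have "((\<lambda>t. - (lam 1 t * P t + lam n t * P t)) \<longlongrightarrow> - (- p + 0)) (at_left tB)"
    by (intro tendsto_minus tendsto_add L1 Ln)
  then show "((\<lambda>t. (lam 1 t * P t + lam n t * P t) / -1) \<longlongrightarrow> p) (at_left tB)" by simp
qed

lemma lntau: "((\<lambda>t. lam n t * (tB - t)) \<longlongrightarrow> 0) (at_left tB)"
proof -
  have "((\<lambda>t. inverse (P t / (tB - t))) \<longlongrightarrow> inverse p) (at_left tB)"
    by (rule tendsto_inverse[OF Ptau]) (use ppos in auto)
  from tendsto_mult[OF Ln this]
  have l: "((\<lambda>t. lam n t * P t * inverse (P t / (tB - t))) \<longlongrightarrow> 0) (at_left tB)" by simp
  have "eventually (\<lambda>t. lam n t * P t * inverse (P t / (tB - t)) = lam n t * (tB - t)) (at_left tB)"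
    using ev0
  proof eventually_elim
    case (elim t)
    have "P t \<noteq> 0" using P_pos[of t] by simp
    then show ?case using elim by (simp add: field_simps)
  qed
  from Lim_transform_eventually[OF l this] show ?thesis .
qed

definition e0 where "e0 = 1 / (4 * real n)"

lemma e0_pos: "e0 > 0" using n by (simp add: e0_def)

definition t0 where "t0 = (SOME t0. 0 < t0 \<and> t0 < tB \<and> (\<forall>t. t0 \<le> t \<and> t < tB \<longrightarrow>
    \<bar>lam n t * (tB - t)\<bar> \<le> e0 \<and> p * (tB - t) / 2 \<le> P t \<and> tB - t \<le> 1 \<and> t \<in> {0<..<tB}))"

lemma t0_props: "0 < t0" "t0 < tB"
  "\<And>t. t0 \<le> t \<Longrightarrow> t < tB \<Longrightarrow> \<bar>lam n t * (tB - t)\<bar> \<le> e0 \<and> p * (tB - t) / 2 \<le> P t \<and> tB - t \<le> 1 \<and> t \<in> {0<..<tB}"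
proof -
  have e1: "eventually (\<lambda>t. dist (lam n t * (tB - t)) 0 < e0) (at_left tB)"
    by (rule tendstoD[OF lntau e0_pos])
  have e2: "eventually (\<lambda>t. p / 2 < P t / (tB - t)) (at_left tB)"
    by (rule order_tendstoD(1)[OF Ptau]) (use ppos in simp)
  have e3: "eventually (\<lambda>t. tB - t \<le> 1) (at_left tB)"
    unfolding eventually_at_left_field by (intro exI[of _ "tB - 1"]) auto
  have "eventually (\<lambda>t. \<bar>lam n t * (tB - t)\<bar> \<le> e0 \<and> p * (tB - t) / 2 \<le> P t \<and> tB - t \<le> 1 \<and> t \<in> {0<..<tB}) (at_left tB)"
    using e1 e2 e3 ev0
  proof eventually_elim
    case (elim t)
    then have "p / 2 * (tB - t) < P t" by (simp add: pos_less_divide_eq)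
    with elim show ?case by (auto simp: dist_real_def)
  qed
  from ev_ex[OF this tB]
  have ex: "\<exists>t0. 0 < t0 \<and> t0 < tB \<and> (\<forall>t. t0 \<le> t \<and> t < tB \<longrightarrow>
    \<bar>lam n t * (tB - t)\<bar> \<le> e0 \<and> p * (tB - t) / 2 \<le> P t \<and> tB - t \<le> 1 \<and> t \<in> {0<..<tB})" by blast
  note s = someI_ex[OF ex, folded t0_def]
  show "0 < t0" "t0 < tB" using s by auto
  show "\<And>t. t0 \<le> t \<Longrightarrow> t < tB \<Longrightarrow> \<bar>lam n t * (tB - t)\<bar> \<le> e0 \<and> p * (tB - t) / 2 \<le> P t \<and> tB - t \<le> 1 \<and> t \<in> {0<..<tB}"
    using s by blast
qed

lemma mI_bound:
  assumes t: "t0 \<le> t" "t < tB"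
  shows "- (real n - 3) * I n t \<le> - (real n - 3) * I n t0 + 1/4 * (ln (tB - t0) - ln (tB - t))"
proof -
  define m where "m = real n - 3"
  define g where "g s = - m * I n s + 1/4 * ln (tB - s)" for s
  have "g t \<le> g t0"
  proof (rule dec_on[of t0 tB g t0 t])
    show "continuous_on {t0..<tB} g" unfolding g_def
      using continuous_on_subset[OF I_cont[OF n_in], of "{t0..<tB}"] t0_props(1)
      by (intro continuous_intros) auto
    fix x assume x: "t0 < x" "x < tB"
    have d: "(g has_real_derivative - m * lam n x + 1/4 * (- 1 / (tB - x))) (at x)"
      unfolding g_def using t0_props(3)[of x] x
      by (intro DERIV_add DERIV_cmult I_d d_tau_ln n_in) auto
    have "\<bar>m\<bar> \<le> real n" using n by (auto simp: m_def)
    have tx: "tB - x > 0" using x by simp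
    have "\<bar>lam n x * (tB - x)\<bar> \<le> e0" using t0_props(3)[of x] x by auto
    then have "\<bar>m * (lam n x * (tB - x))\<bar> \<le> real n * e0"
      unfolding abs_mult using \<open>\<bar>m\<bar> \<le> real n\<close> by (intro mult_mono) auto
    also have "real n * e0 = 1/4" using n by (simp add: e0_def)
    finally have "- m * lam n x * (tB - x) \<le> 1/4" by (simp add: abs_le_iff mult_ac)
    then have "- m * lam n x \<le> 1/4 / (tB - x)" by (simp only: pos_le_divide_eq[OF tx])
    then have "- m * lam n x + 1/4 * (- 1 / (tB - x)) \<le> 0" by simp
    with d show "\<exists>y. DERIV g x :> y \<and> y \<le> 0" by blast
  qed (use t in auto)
  then show ?thesis by (simp add: g_def m_def algebra_simps)
qed

end


context sys2 begin

definition beta where "beta j = (lam0 j - lam0 1) / (lam0 n - lam0 1)"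

lemma beta_pos: "j \<in> {2..n} \<Longrightarrow> beta j > 0"
  using lam0_2[of j] W_pos by (simp add: beta_def)

lemma U_ge: assumes t: "t \<in> {0..<tB}" and j: "j \<in> {2..n}" shows "beta j * U n t \<le> U j t"
proof -
  have j1: "j \<in> {1..n}" using j by auto
  have "(lam0 n - lam0 j) * U 1 t \<ge> 0" using lam0_ord(2)[OF j1] U_pos[of 1 t] by simp
  then have "(lam0 j - lam0 1) * U n t \<le> (lam0 n - lam0 1) * U j t" using decomp[OF t j1] by linarith
  then show ?thesis using W_pos by (simp add: beta_def field_simps)
qed

lemma I_ge: assumes t: "t \<in> {0..<tB}" and j: "j \<in> {2..n}" shows "ln (beta j) + I n t \<le> I j t"
proof -
  have "ln (beta j * U n t) \<le> ln (U j t)"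
    using U_ge[OF t j] beta_pos[OF j] U_pos[of n t] U_pos[of j t] by (subst ln_le_cancel_iff) auto
  then show ?thesis using beta_pos[OF j] by (simp add: ln_mult U_def)
qed

definition Cb where "Cb = (\<Sum>j=2..n. ln (beta j))"

lemma sumI: assumes t: "t \<in> {0..<tB}" shows "I 1 t + Cb + (real n - 1) * I n t \<le> (\<Sum>j=1..n. I j t)"
proof -
  have s1: "(\<Sum>j=1..n. I j t) = I 1 t + (\<Sum>j=2..n. I j t)"
    using sum.atLeast_Suc_atMost[of 1 n "\<lambda>j. I j t"] n by (simp add: numeral_2_eq_2)
  have "(\<Sum>j=2..n. ln (beta j) + I n t) \<le> (\<Sum>j=2..n. I j t)"
    by (rule sum_mono) (use I_ge[OF t] in auto)
  moreover have "(\<Sum>j=2..n. ln (beta j) + I n t) = Cb + real (n - 1) * I n t"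
    by (simp add: sum.distrib Cb_def)
  moreover have "real (n - 1) = real n - 1" using n by simp
  ultimately show ?thesis using s1 by simp
qed

definition K where
  "K = k / real n * rho0 * exp (- Cb) * (2 / p) * exp (- (real n - 3) * I n t0) * (tB - t0) powr (1/4)"

lemma K_pos: "K > 0" using k n rho0 ppos t0_props by (simp add: K_def)

lemma aU_bound:
  assumes t: "t0 \<le> t" "t < tB"
  shows "a t * U n t \<le> K * (tB - t) powr (-5/4)"
proof -
  have t': "t \<in> {0..<tB}" using t t0_props by auto
  define \<tau> where "\<tau> = tB - t"
  define \<tau>0 where "\<tau>0 = tB - t0"
  have tau: "\<tau> > 0" "\<tau>0 > 0" using t t0_props by (auto simp: \<tau>_def \<tau>0_def)
  define S where "S = (\<Sum>j=1..n. I j t)"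
  have kn: "k / real n > 0" using k n by simp
  have "k / real n * (rho t - cb) * U n t \<le> k / real n * rho t * U n t"
    using cb U_pos[of n t] kn by (intro mult_right_mono mult_left_mono) auto
  then have s1: "a t * U n t \<le> k / real n * (rho t * U n t)" by (simp add: a_def mult_ac)
  have s2: "rho t * U n t = rho0 * exp (I n t - S)"
    using rho_eq[OF t'] by (simp add: S_def U_def exp_diff field_simps)
  have e1: "(real n - 1) * I n t = real n * I n t - I n t" "(real n - 3) * I n t = real n * I n t - 3 * I n t"
    by (simp_all add: algebra_simps)
  have s3: "I n t - S \<le> - (I 1 t + I n t) - Cb - (real n - 3) * I n t"
    using sumI[OF t'] unfolding S_def e1 by linarith
  have Pe: "P t = exp (I 1 t + I n t)" by (simp add: P_def U_def exp_add)
  have s4: "exp (- (I 1 t + I n t) - Cb - (real n - 3) * I n t)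
      = exp (- Cb) * (1 / P t) * exp (- (real n - 3) * I n t)"
  proof -
    have eA: "- (I 1 t + I n t) - Cb - (real n - 3) * I n t = - Cb + - (I 1 t + I n t) + - (real n - 3) * I n t" by linarith
    have iP: "1 / P t = exp (- (I 1 t + I n t))" unfolding Pe exp_minus by (simp add: divide_inverse)
    show ?thesis unfolding iP eA exp_add by (rule refl)
  qed
  have Pt: "p * \<tau> / 2 \<le> P t" using t0_props(3)[OF t] by (simp add: \<tau>_def)
  have s5: "1 / P t \<le> 2 / (p * \<tau>)"
    using Pt ppos tau P_pos[of t] by (simp add: field_simps)
  have s6: "exp (- (real n - 3) * I n t) \<le> exp (- (real n - 3) * I n t0) * exp (1/4 * (ln \<tau>0 - ln \<tau>))"
    using mI_bound[OF t] by (simp add: \<tau>_def \<tau>0_def exp_add[symmetric])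
  have s7: "exp (1/4 * (ln \<tau>0 - ln \<tau>)) = \<tau>0 powr (1/4) * \<tau> powr (-1/4)"
  proof -
    have "\<tau>0 powr (1/4) * \<tau> powr (-1/4) = exp (1/4 * ln \<tau>0) * exp (-1/4 * ln \<tau>)"
      using tau by (simp add: powr_def)
    also have "\<dots> = exp (1/4 * ln \<tau>0 + -1/4 * ln \<tau>)" by (simp only: exp_add)
    also have "1/4 * ln \<tau>0 + -1/4 * ln \<tau> = 1/4 * (ln \<tau>0 - ln \<tau>)" by (simp add: algebra_simps)
    finally show ?thesis by simp
  qed
  have s8: "\<tau> powr (-5/4) = (1 / \<tau>) * \<tau> powr (-1/4)"
  proof -
    have "\<tau> powr (-1) * \<tau> powr (-1/4) = \<tau> powr (-1 + -1/4)" by (rule powr_add[symmetric])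
    moreover have "(-1 + -1/4 :: real) = -5/4" by simp
    moreover have "\<tau> powr (-1) = 1 / \<tau>" using tau by (simp add: powr_minus_divide)
    ultimately show ?thesis by simp
  qed
  have "a t * U n t \<le> k / real n * (rho0 * exp (- (I 1 t + I n t) - Cb - (real n - 3) * I n t))"
  proof -
    have "exp (I n t - S) \<le> exp (- (I 1 t + I n t) - Cb - (real n - 3) * I n t)" using s3 by simp
    then have "k / real n * (rho t * U n t) \<le> k / real n * (rho0 * exp (- (I 1 t + I n t) - Cb - (real n - 3) * I n t))"
      unfolding s2 using kn rho0 by (intro mult_left_mono) auto
    with s1 show ?thesis by (rule order_trans)
  qed
  also have "\<dots> = k / real n * (rho0 * (exp (- Cb) * (1 / P t) * exp (- (real n - 3) * I n t)))"
    by (simp only: s4)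
  also have "\<dots> \<le> k / real n * (rho0 * (exp (- Cb) * (2 / (p * \<tau>)) *
      (exp (- (real n - 3) * I n t0) * exp (1/4 * (ln \<tau>0 - ln \<tau>)))))"
    using kn rho0 s5 s6 P_pos[of t] tau ppos
    by (intro mult_left_mono mult_mono) auto
  also have "\<dots> = K * \<tau> powr (-5/4)"
    unfolding s7 s8 K_def \<tau>0_def[symmetric] by (simp add: field_simps)
  finally show ?thesis by (simp add: \<tau>_def)
qed

end


lemma inc_lim:
  fixes g :: "real \<Rightarrow> real"
  assumes cd: "c < d" and mono: "\<And>s t. c \<le> s \<Longrightarrow> s \<le> t \<Longrightarrow> t < d \<Longrightarrow> g s \<le> g t"
    and bnd: "\<And>t. c \<le> t \<Longrightarrow> t < d \<Longrightarrow> g t \<le> M"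
  shows "\<exists>L. (g \<longlongrightarrow> L) (at_left d)"
proof -
  define L where "L = Sup (g ` {c..<d})"
  have ne: "g ` {c..<d} \<noteq> {}" using cd by auto
  have bdd: "bdd_above (g ` {c..<d})" using bnd by (auto intro!: bdd_aboveI2)
  have up: "g t \<le> L" if "c \<le> t" "t < d" for t
    unfolding L_def by (rule cSUP_upper[OF _ bdd]) (use that in auto)
  have "(g \<longlongrightarrow> L) (at_left d)"
  proof (rule order_tendstoI)
    fix y assume y: "y < L"
    then obtain s where s: "s \<in> {c..<d}" "y < g s"
      using less_cSUP_iff[OF _ bdd] cd unfolding L_def by auto
    show "eventually (\<lambda>t. y < g t) (at_left d)"
      unfolding eventually_at_left_field
      by (rule exI[of _ s]) (use s mono in \<open>auto intro: less_le_trans\<close>)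
  next
    fix y assume y: "L < y"
    show "eventually (\<lambda>t. g t < y) (at_left d)"
      unfolding eventually_at_left_field
    proof (intro exI[of _ c] conjI allI impI)
      show "c < d" by (rule cd)
      fix t assume "c < t" "t < d"
      then have "g t \<le> L" using up by auto
      then show "g t < y" using y by simp
    qed
  qed
  then show ?thesis by blast
qed

context sys2 begin

definition Dn where "Dn t = lam n t * U n t"

lemma Dn_d: "t \<in> {0<..<tB} \<Longrightarrow> (Dn has_real_derivative a t * U n t) (at t)"
  unfolding Dn_def[abs_def] by (rule D_d[OF _ n_in])

lemma Un_d: "t \<in> {0<..<tB} \<Longrightarrow> (U n has_real_derivative Dn t) (at t)"
  unfolding Dn_def by (rule U_d[OF _ n_in])

lemma Dn_cont: "continuous_on {0..<tB} Dn"
  unfolding Dn_def[abs_def] using lam_cont[OF n_in] U_cont[OF n_in] by (intro continuous_intros)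

lemma t0_in: "t0 \<le> t \<Longrightarrow> t < tB \<Longrightarrow> t \<in> {0<..<tB}" using t0_props by auto

lemma cont_sub: "continuous_on {0..<tB} f \<Longrightarrow> continuous_on {t0..<tB} f"
  by (rule continuous_on_subset) (use t0_props in auto)

lemma tau_pow_cont: "continuous_on {t0..<tB} (\<lambda>s. (tB - s) powr c)"
  by (intro continuous_intros) auto

lemma Dn_up: assumes t: "t0 \<le> t" "t < tB"
  shows "Dn t \<le> Dn t0 + 4 * K * (tB - t) powr (-1/4)"
proof -
  define g where "g s = Dn s - 4 * K * (tB - s) powr (-1/4)" for s
  have "g t \<le> g t0"
  proof (rule dec_on[of t0 tB g t0 t])
    show "continuous_on {t0..<tB} g" unfolding g_def
      using cont_sub[OF Dn_cont] tau_pow_cont by (intro continuous_intros) auto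
    fix x assume x: "t0 < x" "x < tB"
    have "(g has_real_derivative a x * U n x - 4 * K * (- (-1/4) * (tB - x) powr (-1/4 - 1))) (at x)"
      unfolding g_def using x t0_in[of x] by (intro DERIV_diff DERIV_cmult Dn_d d_tau_powr) auto
    moreover have "a x * U n x - 4 * K * (- (-1/4) * (tB - x) powr (-1/4 - 1)) \<le> 0"
      using aU_bound[of x] x by simp
    ultimately show "\<exists>y. DERIV g x :> y \<and> y \<le> 0" by blast
  qed (use t in auto)
  moreover have "0 \<le> 4 * K * (tB - t0) powr (-1/4)" using K_pos by simp
  ultimately show ?thesis by (simp add: g_def)
qed

definition Bu where "Bu = U n t0 + \<bar>Dn t0\<bar> * tB + 16/3 * K * (tB - t0) powr (3/4)"

lemma Un_bound: assumes t: "t0 \<le> t" "t < tB" shows "U n t \<le> Bu"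
proof -
  define c where "c = \<bar>Dn t0\<bar>"
  define g where "g s = U n s - c * s + 16/3 * K * (tB - s) powr (3/4)" for s
  have "g t \<le> g t0"
  proof (rule dec_on[of t0 tB g t0 t])
    show "continuous_on {t0..<tB} g" unfolding g_def
      using cont_sub[OF U_cont[OF n_in]] tau_pow_cont by (intro continuous_intros) auto
    fix x assume x: "t0 < x" "x < tB"
    have "(g has_real_derivative Dn x - c * 1 + 16/3 * K * (- (3/4) * (tB - x) powr (3/4 - 1))) (at x)"
      unfolding g_def using x t0_in[of x] by (intro DERIV_add DERIV_diff DERIV_cmult Un_d d_tau_powr DERIV_ident) auto
    moreover have "Dn x - c * 1 + 16/3 * K * (- (3/4) * (tB - x) powr (3/4 - 1)) \<le> 0"
      using Dn_up[of x] x by (simp add: c_def)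
    ultimately show "\<exists>y. DERIV g x :> y \<and> y \<le> 0" by blast
  qed (use t in auto)
  moreover have "c * t \<le> c * tB" "0 \<le> c * t0" using t t0_props by (auto simp: c_def intro: mult_left_mono)
  moreover have "0 \<le> 16/3 * K * (tB - t) powr (3/4)" using K_pos by simp
  ultimately show ?thesis by (simp add: g_def Bu_def c_def)
qed

definition c1 where "c1 = k / real n * cb * Bu"
definition c2 where "c2 = \<bar>Dn t0\<bar> + c1 * tB"

lemma Bu_pos: "Bu > 0"
  using Un_bound[of t0] t0_props U_pos[of n t0] by auto

lemma c1_nonneg: "0 \<le> c1"
  unfolding c1_def using k cb Bu_pos by simp

lemma c2_nonneg: "0 \<le> c2"
  unfolding c2_def using c1_nonneg tB by simp

lemma aU_low: assumes t: "t0 \<le> t" "t < tB" shows "a t * U n t \<ge> - c1"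
proof -
  have "rho t > 0" using rho_pos t t0_props by auto
  then have "a t \<ge> - (k / real n * cb)" using k n by (simp add: a_def field_simps)
  moreover have "U n t \<le> Bu" "U n t > 0" using Un_bound[OF t] U_pos by auto
  moreover have "0 \<le> k / real n * cb" using k cb by simp
  ultimately have "(- (k / real n * cb)) * U n t \<le> a t * U n t" by (intro mult_right_mono) auto
  then have A: "- ((k / real n * cb) * U n t) \<le> a t * U n t" by (simp only: minus_mult_left)
  have B: "(k / real n * cb) * U n t \<le> (k / real n * cb) * Bu"
    by (rule mult_left_mono) (use \<open>U n t \<le> Bu\<close> \<open>0 \<le> k / real n * cb\<close> in auto)
  show ?thesis using A B unfolding c1_def by linarith
qed

lemma Dn_low: assumes t: "t0 \<le> t" "t < tB" shows "Dn t \<ge> - c2"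
proof -
  define g where "g s = Dn s + c1 * s" for s
  have "g t0 \<le> g t"
  proof (rule inc_on[of t0 tB g t0 t])
    show "continuous_on {t0..<tB} g" unfolding g_def
      using cont_sub[OF Dn_cont] by (intro continuous_intros) auto
    fix x assume x: "t0 < x" "x < tB"
    have "(g has_real_derivative a x * U n x + c1 * 1) (at x)"
      unfolding g_def using x t0_in[of x] by (intro DERIV_add DERIV_cmult Dn_d DERIV_ident) auto
    moreover have "a x * U n x + c1 * 1 \<ge> 0" using aU_low[of x] x by simp
    ultimately show "\<exists>y. DERIV g x :> y \<and> y \<ge> 0" by blast
  qed (use t in auto)
  moreover have "c1 * t \<le> c1 * tB" "0 \<le> c1 * t0"
    using t t0_props c1_nonneg by (auto intro!: mult_left_mono)
  ultimately show ?thesis by (simp add: g_def c2_def)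
qed

lemma Un_conv: "\<exists>l. (U n \<longlongrightarrow> l) (at_left tB)"
proof -
  define g where "g s = U n s + c2 * s" for s
  have "\<exists>L. (g \<longlongrightarrow> L) (at_left tB)"
  proof (rule inc_lim[OF t0_props(2)])
    fix s t assume st: "t0 \<le> s" "s \<le> t" "t < tB"
    show "g s \<le> g t"
    proof (rule inc_on[of t0 tB g s t])
      show "continuous_on {t0..<tB} g" unfolding g_def
        using cont_sub[OF U_cont[OF n_in]] by (intro continuous_intros) auto
      fix x assume x: "t0 < x" "x < tB"
      have "(g has_real_derivative Dn x + c2 * 1) (at x)"
        unfolding g_def using x t0_in[of x] by (intro DERIV_add DERIV_cmult Un_d DERIV_ident) auto
      moreover have "Dn x + c2 * 1 \<ge> 0" using Dn_low[of x] x by simp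
      ultimately show "\<exists>y. DERIV g x :> y \<and> y \<ge> 0" by blast
    qed (use st in auto)
  next
    fix t assume t: "t0 \<le> t" "t < tB"
    have "c2 \<ge> 0" by (rule c2_nonneg)
    moreover have "c2 * t \<le> c2 * tB" using \<open>c2 \<ge> 0\<close> t by (intro mult_left_mono) auto
    ultimately show "g t \<le> Bu + c2 * tB" using Un_bound[OF t] by (simp add: g_def)
  qed
  then obtain L where L: "(g \<longlongrightarrow> L) (at_left tB)" by blast
  have "((\<lambda>s. g s - c2 * s) \<longlongrightarrow> L - c2 * tB) (at_left tB)"
    by (intro tendsto_intros L)
  then show ?thesis by (auto simp: g_def)
qed

end


context sys2 begin

lemma prod_apos:
  assumes "((\<lambda>t. \<Prod>j=1..n. U j t) \<longlongrightarrow> 0) (at_left tB)"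
  shows "eventually (\<lambda>t. a t > 0) (at_left tB)"
proof -
  have "eventually (\<lambda>t. (\<Prod>j=1..n. U j t) < rho0 / cb) (at_left tB)"
    by (rule order_tendstoD(2)[OF assms]) (use rho0 cb in simp)
  then show ?thesis using ev0
  proof eventually_elim
    case (elim t)
    have pp: "(\<Prod>j=1..n. U j t) > 0" by (simp add: U_pos prod_pos)
    have "cb * (\<Prod>j=1..n. U j t) < rho0" using elim(1) cb by (simp add: pos_less_divide_eq mult.commute)
    then have "cb < rho0 / (\<Prod>j=1..n. U j t)" using pp by (simp add: pos_less_divide_eq)
    then have "cb < rho t" using rho_prod[of t] elim(2) by simp
    then show ?case using k n by (simp add: a_def)
  qed
qed

lemma U_le_sum: assumes t: "t \<in> {0..<tB}" and j: "j \<in> {1..n}" shows "U j t \<le> U 1 t + U n t"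
proof -
  have "(lam0 j - lam0 1) * U n t \<le> (lam0 n - lam0 1) * U n t"
    using lam0_ord[OF j] U_pos[of n t] by (intro mult_right_mono) auto
  moreover have "(lam0 n - lam0 j) * U 1 t \<le> (lam0 n - lam0 1) * U 1 t"
    using lam0_ord[OF j] U_pos[of 1 t] by (intro mult_right_mono) auto
  ultimately have "(lam0 n - lam0 1) * U j t \<le> (lam0 n - lam0 1) * (U 1 t + U n t)"
    using decomp[OF t j] by (simp add: algebra_simps)
  then show ?thesis using W_pos by simp
qed

lemma ratio_dec: assumes t: "t0 \<le> t" "t < tB" shows "U 1 t * U n t0 \<le> U 1 t0 * U n t"
proof -
  define g where "g s = I 1 s - I n s" for s
  have "g t \<le> g t0"
  proof (rule dec_on[of t0 tB g t0 t])
    show "continuous_on {t0..<tB} g" unfolding g_def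
      using cont_sub[OF I_cont[OF one_in]] cont_sub[OF I_cont[OF n_in]] by (intro continuous_intros)
    fix x assume x: "t0 < x" "x < tB"
    have "(g has_real_derivative lam 1 x - lam n x) (at x)"
      unfolding g_def using x t0_in[of x] by (intro DERIV_diff I_d one_in n_in) auto
    moreover have "lam 1 x - lam n x \<le> 0" using lam_ord(2)[OF _ one_in, of x] x t0_props by auto
    ultimately show "\<exists>y. DERIV g x :> y \<and> y \<le> 0" by blast
  qed (use t in auto)
  then have "I 1 t + I n t0 \<le> I 1 t0 + I n t" by (simp add: g_def)
  then have "exp (I 1 t + I n t0) \<le> exp (I 1 t0 + I n t)" by simp
  then show ?thesis by (simp add: U_def exp_add)
qed

lemma ell_pos: "\<exists>l>0. (U n \<longlongrightarrow> l) (at_left tB)"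
proof -
  obtain l where l: "(U n \<longlongrightarrow> l) (at_left tB)" using Un_conv by blast
  have l0: "0 \<le> l"
    by (rule tendsto_lowerbound[OF l]) (auto intro: always_eventually less_imp_le U_pos)
  have "l \<noteq> 0"
  proof
    assume lz: "l = 0"
    define r0 where "r0 = U 1 t0 / U n t0"
    have r0: "r0 \<ge> 0" using U_pos by (simp add: r0_def less_imp_le)
    have evt0: "eventually (\<lambda>t. t0 \<le> t \<and> t < tB) (at_left tB)"
      unfolding eventually_at_left_field using t0_props by (intro exI[of _ t0]) auto
    have ub: "eventually (\<lambda>t. (\<Prod>j=1..n. U j t) \<le> ((r0 + 1) * U n t) ^ n) (at_left tB)"
      using evt0
    proof eventually_elim
      case (elim t)
      have t': "t \<in> {0..<tB}" using elim t0_props by auto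
      have "U 1 t * U n t0 \<le> U 1 t0 * U n t" by (rule ratio_dec) (use elim in auto)
      then have "U 1 t \<le> r0 * U n t" using U_pos[of n t0] by (simp add: r0_def field_simps)
      then have "U j t \<le> (r0 + 1) * U n t" if "j \<in> {1..n}" for j
        using U_le_sum[OF t' that] by (simp add: algebra_simps)
      then have "(\<Prod>j=1..n. U j t) \<le> (\<Prod>j=1..n. (r0 + 1) * U n t)"
        by (intro prod_mono) (auto intro: less_imp_le U_pos)
      then show ?case by simp
    qed
    have lp: "((\<lambda>t. ((r0 + 1) * U n t) ^ n) \<longlongrightarrow> ((r0 + 1) * l) ^ n) (at_left tB)"
      by (intro tendsto_intros l)
    have z: "((r0 + 1) * l) ^ n = 0" using lz n by simp
    have lim0: "((\<lambda>t. ((r0 + 1) * U n t) ^ n) \<longlongrightarrow> 0) (at_left tB)" using lp unfolding z .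
    have "((\<lambda>t. \<Prod>j=1..n. U j t) \<longlongrightarrow> 0) (at_left tB)"
    proof (rule tendsto_sandwich[OF _ ub tendsto_const lim0])
      show "eventually (\<lambda>t. 0 \<le> (\<Prod>j=1..n. U j t)) (at_left tB)"
        by (intro always_eventually allI prod_nonneg) (auto intro: less_imp_le U_pos)
    qed
    from prod_apos[OF this] evt0
    have "eventually (\<lambda>t. a t > 0 \<and> t0 \<le> t) (at_left tB)" by eventually_elim auto
    then obtain t2 where t2: "0 < t2" "t2 < tB" and t2P: "\<And>t. t2 \<le> t \<Longrightarrow> t < tB \<Longrightarrow> a t > 0 \<and> t0 \<le> t"
      using ev_ex[OF _ tB] by blast
    have Dinc: "Dn s \<le> Dn t" if "t2 \<le> s" "s \<le> t" "t < tB" for s t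
    proof (rule inc_on[of t2 tB Dn s t])
      show "continuous_on {t2..<tB} Dn" by (rule continuous_on_subset[OF Dn_cont]) (use t2 in auto)
      fix x assume x: "t2 < x" "x < tB"
      have "(Dn has_real_derivative a x * U n x) (at x)" using Dn_d[of x] x t2 by auto
      moreover have "a x * U n x \<ge> 0" using t2P[of x] x U_pos[of n x] by simp
      ultimately show "\<exists>y. DERIV Dn x :> y \<and> y \<ge> 0" by blast
    qed (use that in auto)
    have conv: "lam n t * (tB - t) \<le> -1" if t: "t2 \<le> t" "t < tB" for t
    proof -
      define \<phi> where "\<phi> s = U n s - U n t - Dn t * (s - t)" for s
      have phi: "0 \<le> \<phi> s" if s: "t \<le> s" "s < tB" for s
      proof -
        have "\<phi> t \<le> \<phi> s"
        proof (rule inc_on[of t tB \<phi> t s])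
          show "continuous_on {t..<tB} \<phi>" unfolding \<phi>_def
            using continuous_on_subset[OF U_cont[OF n_in], of "{t..<tB}"] t t2 by (intro continuous_intros) auto
          fix x assume x: "t < x" "x < tB"
          have "(\<phi> has_real_derivative Dn x - 0 - (Dn t * (1 - 0))) (at x)"
            unfolding \<phi>_def using x t t2 by (intro DERIV_diff DERIV_cmult Un_d DERIV_ident DERIV_const) auto
          moreover have "Dn x - 0 - (Dn t * (1 - 0)) \<ge> 0" using Dinc[of t x] x t by simp
          ultimately show "\<exists>y. DERIV \<phi> x :> y \<and> y \<ge> 0" by blast
        qed (use s in auto)
        then show ?thesis by (simp add: \<phi>_def)
      qed
      have "(\<phi> \<longlongrightarrow> l - U n t - Dn t * (tB - t)) (at_left tB)"
        unfolding \<phi>_def by (intro tendsto_intros l)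
      moreover have "eventually (\<lambda>s. 0 \<le> \<phi> s) (at_left tB)"
        unfolding eventually_at_left_field using t phi by (intro exI[of _ t]) auto
      ultimately have "0 \<le> l - U n t - Dn t * (tB - t)"
        by (intro tendsto_lowerbound) auto
      then have "lam n t * (tB - t) * U n t \<le> - 1 * U n t" using lz by (simp add: Dn_def algebra_simps)
      then show ?thesis using U_pos[of n t] by (simp only: mult_le_cancel_right_pos)
    qed
    have "eventually (\<lambda>t. dist (lam n t * (tB - t)) 0 < 1/2) (at_left tB)"
      by (rule tendstoD[OF lntau]) simp
    moreover have "eventually (\<lambda>t. t2 \<le> t \<and> t < tB) (at_left tB)"
      unfolding eventually_at_left_field using t2 by (intro exI[of _ t2]) auto
    ultimately have "eventually (\<lambda>t. False) (at_left tB)"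
    proof eventually_elim
      case (elim t)
      then show ?case using conv[of t] by (auto simp: dist_real_def)
    qed
    then show False by simp
  qed
  with l l0 show ?thesis by (intro exI[of _ l]) auto
qed

end


context sys2 begin

lemma concl2: "\<exists>C. ((\<lambda>t. integral {0..t} (\<lambda>s. lam 1 s + 1 / (tB - s))) \<longlongrightarrow> C) (at_left tB)"
proof -
  obtain l where l: "l > 0" "(U n \<longlongrightarrow> l) (at_left tB)" using ell_pos by blast
  have "((\<lambda>t. P t / (tB - t) / U n t) \<longlongrightarrow> p / l) (at_left tB)"
    by (intro tendsto_divide Ptau l) (use l in auto)
  from tendsto_add[OF tendsto_ln[OF this] tendsto_const[of "ln tB"]]
  have lim: "((\<lambda>t. ln (P t / (tB - t) / U n t) + ln tB) \<longlongrightarrow> ln (p / l) + ln tB) (at_left tB)"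
    using l ppos by simp
  have "eventually (\<lambda>t. ln (P t / (tB - t) / U n t) + ln tB = integral {0..t} (\<lambda>s. lam 1 s + 1 / (tB - s))) (at_left tB)"
    using ev0
  proof eventually_elim
    case (elim t)
    have c1: "continuous_on {0..t} (lam 1)" by (rule continuous_on_subset[OF lam_cont[OF one_in]]) (use elim in auto)
    have c2: "continuous_on {0..t} (\<lambda>s. 1 / (tB - s))" by (intro continuous_intros) (use elim in auto)
    have int1: "integral {0..t} (\<lambda>s. 1 / (tB - s)) = ln tB - ln (tB - t)"
    proof -
      have "((\<lambda>s. 1 / (tB - s)) has_integral (- ln (tB - t)) - (- ln (tB - 0))) {0..t}"
      proof (rule fundamental_theorem_of_calculus)
        show "0 \<le> t" using elim by simp
        fix x assume x: "x \<in> {0..t}"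
        have "((\<lambda>s. - ln (tB - s)) has_real_derivative - (- 1 / (tB - x))) (at x)"
          using x elim by (intro DERIV_minus d_tau_ln) auto
        then have "((\<lambda>s. - ln (tB - s)) has_real_derivative 1 / (tB - x)) (at x within {0..t})"
          by (auto intro: has_field_derivative_at_within)
        then show "((\<lambda>s. - ln (tB - s)) has_vector_derivative 1 / (tB - x)) (at x within {0..t})"
          by (simp add: has_real_derivative_iff_has_vector_derivative)
      qed
      then show ?thesis by (simp add: integral_unique)
    qed
    have "integral {0..t} (\<lambda>s. lam 1 s + 1 / (tB - s)) = integral {0..t} (lam 1) + integral {0..t} (\<lambda>s. 1 / (tB - s))"
      by (rule integral_add) (use integrable_continuous_interval[OF c1] integrable_continuous_interval[OF c2] in auto)
    also have "integral {0..t} (lam 1) = ln (U 1 t)" by (simp add: I_def U_def)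
    finally have e: "integral {0..t} (\<lambda>s. lam 1 s + 1 / (tB - s)) = ln (U 1 t) + (ln tB - ln (tB - t))"
      unfolding int1 .
    have "P t / (tB - t) / U n t = U 1 t / (tB - t)"
      using U_pos[of n t] elim by (simp add: P_def field_simps)
    moreover have "ln (U 1 t / (tB - t)) = ln (U 1 t) - ln (tB - t)"
      using U_pos[of 1 t] elim by (simp add: ln_div)
    ultimately show ?case unfolding e by simp
  qed
  from Lim_transform_eventually[OF lim this] show ?thesis by blast
qed

end


context sys2 begin

lemma concl1: assumes i2: "i \<in> {2..n}" shows "lam i absolutely_integrable_on {0<..<tB}"
proof -
  have i: "i \<in> {1..n}" using i2 by auto
  obtain l where l: "l > 0" "(U n \<longlongrightarrow> l) (at_left tB)" using ell_pos by blast
  have "((\<lambda>t. P t / U n t) \<longlongrightarrow> 0 / l) (at_left tB)"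
    by (intro tendsto_divide P_lim0 l) (use l in auto)
  moreover have "(\<lambda>t. P t / U n t) = U 1"
  proof
    fix t have "U n t \<noteq> 0" using U_pos[of n t] by simp
    then show "P t / U n t = U 1 t" by (simp add: P_def)
  qed
  ultimately have U1l: "(U 1 \<longlongrightarrow> 0) (at_left tB)" by simp
  define W where "W = lam0 n - lam0 1"
  have Wp: "W > 0" using W_pos by (simp add: W_def)
  define Ul where "Ul = ((lam0 i - lam0 1) * l + (lam0 n - lam0 i) * 0) / W"
  have "((\<lambda>t. ((lam0 i - lam0 1) * U n t + (lam0 n - lam0 i) * U 1 t) / W) \<longlongrightarrow> Ul) (at_left tB)"
    unfolding Ul_def by (intro tendsto_intros l U1l) (use Wp in auto)
  moreover have "eventually (\<lambda>t. ((lam0 i - lam0 1) * U n t + (lam0 n - lam0 i) * U 1 t) / W = U i t) (at_left tB)"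
    using ev0 by eventually_elim (use decomp[OF _ i] Wp in \<open>auto simp: W_def field_simps\<close>)
  ultimately have Uil: "(U i \<longlongrightarrow> Ul) (at_left tB)" by (rule Lim_transform_eventually)
  have ub: "eventually (\<lambda>t. (\<Prod>j=1..n. U j t) \<le> U 1 t * (U 1 t + U n t) ^ (n - 1)) (at_left tB)"
    using ev0
  proof eventually_elim
    case (elim t)
    have t': "t \<in> {0..<tB}" using elim by auto
    have s: "(\<Prod>j=1..n. U j t) = U 1 t * (\<Prod>j=2..n. U j t)"
      using prod.atLeast_Suc_atMost[of 1 n "\<lambda>j. U j t"] n by (simp add: numeral_2_eq_2)
    have "(\<Prod>j=2..n. U j t) \<le> (\<Prod>j=2..n. U 1 t + U n t)"
      by (intro prod_mono) (use U_le_sum[OF t'] in \<open>auto intro: less_imp_le U_pos\<close>)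
    also have "\<dots> = (U 1 t + U n t) ^ (n - 1)" by simp
    finally show ?case unfolding s using U_pos[of 1 t] by (simp add: mult_left_mono)
  qed
  have lp: "((\<lambda>t. U 1 t * (U 1 t + U n t) ^ (n - 1)) \<longlongrightarrow> 0 * (0 + l) ^ (n - 1)) (at_left tB)"
    by (intro tendsto_intros U1l l)
  have "((\<lambda>t. \<Prod>j=1..n. U j t) \<longlongrightarrow> 0) (at_left tB)"
  proof (rule tendsto_sandwich[OF _ ub tendsto_const])
    show "eventually (\<lambda>t. 0 \<le> (\<Prod>j=1..n. U j t)) (at_left tB)"
      by (intro always_eventually allI prod_nonneg) (auto intro: less_imp_le U_pos)
    show "((\<lambda>t. U 1 t * (U 1 t + U n t) ^ (n - 1)) \<longlongrightarrow> 0) (at_left tB)" using lp by simp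
  qed
  from prod_apos[OF this]
  have ev1: "eventually (\<lambda>t. a t > 0) (at_left tB)" .
  have ev2: "eventually (\<lambda>t. l / 2 < U n t) (at_left tB)"
    by (rule order_tendstoD(1)[OF l(2)]) (use l in simp)
  from ev1 ev2 ev0 have "eventually (\<lambda>t. a t > 0 \<and> l / 2 < U n t \<and> t \<in> {0<..<tB}) (at_left tB)"
    by eventually_elim auto
  then obtain t3 where t3: "0 < t3" "t3 < tB"
    and t3P: "\<And>t. t3 \<le> t \<Longrightarrow> t < tB \<Longrightarrow> a t > 0 \<and> l / 2 < U n t \<and> t \<in> {0<..<tB}"
    using ev_ex[OF _ tB] by blast
  define m where "m = beta i * l / 2"
  have mp: "m > 0" using beta_pos[OF i2] l by (simp add: m_def)
  have Uim: "m \<le> U i t" if "t3 \<le> t" "t < tB" for t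
  proof -
    have "beta i * (l / 2) \<le> beta i * U n t" using t3P[OF that] beta_pos[OF i2] by (intro mult_left_mono) auto
    also have "\<dots> \<le> U i t" using U_ge[OF _ i2, of t] t3P[OF that] by auto
    finally show ?thesis by (simp add: m_def)
  qed
  define Di where "Di t = lam i t * U i t" for t
  have Di_d: "(Di has_real_derivative a t * U i t) (at t)" if "t \<in> {0<..<tB}" for t
    unfolding Di_def[abs_def] by (rule D_d[OF that i])
  have Dinc: "Di s \<le> Di t" if "t3 \<le> s" "s \<le> t" "t < tB" for s t
  proof (rule inc_on[of t3 tB Di s t])
    show "continuous_on {t3..<tB} Di" unfolding Di_def[abs_def]
      using continuous_on_subset[OF lam_cont[OF i], of "{t3..<tB}"] continuous_on_subset[OF U_cont[OF i], of "{t3..<tB}"] t3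
      by (intro continuous_intros) auto
    fix x assume x: "t3 < x" "x < tB"
    have "(Di has_real_derivative a x * U i x) (at x)" using Di_d t3P[of x] x by auto
    moreover have "a x * U i x \<ge> 0" using t3P[of x] x U_pos[of i x] by simp
    ultimately show "\<exists>y. DERIV Di x :> y \<and> y \<ge> 0" by blast
  qed (use that in auto)
  define c where "c = 2 * \<bar>Di t3\<bar>"
  define g where "g x = (Di x + c) / m" for x
  define G where "G x = (U i x + c * x) / m" for x
  have gnn: "0 \<le> g x" if "t3 \<le> x" "x < tB" for x
    using Dinc[of t3 x] that mp by (simp add: g_def c_def)
  have bnd: "\<bar>lam i x\<bar> \<le> g x" if "t3 \<le> x" "x < tB" for x
  proof -
    have "\<bar>Di x\<bar> \<le> Di x + c" using Dinc[of t3 x] that by (simp add: c_def abs_le_iff)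
    moreover have "\<bar>Di x\<bar> = \<bar>lam i x\<bar> * U i x" using U_pos[of i x] by (simp add: Di_def abs_mult)
    moreover have "\<bar>lam i x\<bar> * m \<le> \<bar>lam i x\<bar> * U i x" using Uim[OF that] by (intro mult_left_mono) auto
    ultimately have "\<bar>lam i x\<bar> * m \<le> Di x + c" by linarith
    then show ?thesis using mp by (simp add: g_def pos_le_divide_eq)
  qed
  have si: "set_integrable lborel (einterval (ereal t3) (ereal tB)) g"
  proof (rule interval_integral_FTC_nonneg[where F = G and A = "G t3" and B = "(Ul + c * tB) / m"])
    show "ereal t3 < ereal tB" using t3 by simp
    fix x assume x: "ereal t3 < ereal x" "ereal x < ereal tB"
    then have x': "t3 < x" "x < tB" by auto
    have xin: "x \<in> {0<..<tB}" using t3P[of x] x' by auto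
    have "(G has_real_derivative (Di x + c * 1) / m) (at x)"
      unfolding G_def Di_def using xin by (intro DERIV_cdivide DERIV_add DERIV_cmult U_d i DERIV_ident)
    then show "DERIV G x :> g x" by (simp add: g_def)
    have "isCont (lam i) x" using lam_d[OF xin i] by (rule DERIV_continuous)
    moreover have "isCont (U i) x" using U_d[OF xin i] by (rule DERIV_continuous)
    ultimately show "isCont g x" unfolding g_def Di_def using mp by (intro continuous_intros) auto
  next
    show "AE x in lborel. ereal t3 < ereal x \<longrightarrow> ereal x < ereal tB \<longrightarrow> 0 \<le> g x"
      using gnn by (intro AE_I2) auto
  next
    have t3in: "t3 \<in> {0<..<tB}" using t3 by auto
    have "isCont (U i) t3" using U_d[OF t3in i] by (rule DERIV_continuous)
    then have "isCont G t3" unfolding G_def using mp by (intro continuous_intros) auto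
    then have "(G \<longlongrightarrow> G t3) (at_right t3)"
      by (simp add: isCont_def filterlim_at_split)
    then show "((G \<circ> real_of_ereal) \<longlongrightarrow> G t3) (at_right (ereal t3))"
      by (simp add: ereal_tendsto_simps1)
  next
    have "(G \<longlongrightarrow> (Ul + c * tB) / m) (at_left tB)"
      unfolding G_def by (intro tendsto_intros Uil) (use mp in auto)
    then show "((G \<circ> real_of_ereal) \<longlongrightarrow> (Ul + c * tB) / m) (at_left (ereal tB))"
      by (simp add: ereal_tendsto_simps1)
  qed
  then have si': "set_integrable lborel {t3<..<tB} g" by simp
  have gai: "g absolutely_integrable_on {t3<..<tB}"
    using si' unfolding set_integrable_def
    by (subst integrable_completion) (auto intro: borel_measurable_integrable)
  have gint: "g integrable_on {t3<..<tB}"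
    by (rule set_lebesgue_integral_eq_integral(1)[OF gai])
  have meas: "lam i \<in> borel_measurable (lebesgue_on {t3<..<tB})"
  proof (rule continuous_imp_measurable_on_sets_lebesgue)
    show "continuous_on {t3<..<tB} (lam i)" by (rule continuous_on_subset[OF lam_cont[OF i]]) (use t3 in auto)
  qed auto
  have A1: "lam i absolutely_integrable_on {t3<..<tB}"
    by (rule measurable_bounded_by_integrable_imp_absolutely_integrable[OF meas _ gint])
      (use bnd in auto)
  have A2: "lam i absolutely_integrable_on {0..t3}"
    by (rule absolutely_integrable_continuous_real) (rule continuous_on_subset[OF lam_cont[OF i]], use t3 in auto)
  have A3: "lam i absolutely_integrable_on ({0..t3} \<union> {t3<..<tB})"
    by (rule set_integrable_Un[OF A2 A1]) auto
  show ?thesis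
    by (rule set_integrable_subset[OF A3]) auto
qed

end


theorem lemma4p3:
  fixes n :: nat and k cb rho0 tB p q :: real
    and lam0 :: "nat \<Rightarrow> real" and lam :: "nat \<Rightarrow> real \<Rightarrow> real" and rho :: "real \<Rightarrow> real"
    and u :: "nat \<Rightarrow> real \<Rightarrow> real" and R1 :: "real \<Rightarrow> real"
  assumes n: "n \<ge> 2" and k: "k > 0" and cb: "cb > 0" and rho0: "rho0 > 0"
    and lam0_12: "lam0 1 < lam0 2"
    and lam0_mono: "\<forall>i\<in>{2..<n}. lam0 i \<le> lam0 (i + 1)"
    and sol: "maximal_solution n k cb rho0 lam0 tB lam rho"
    and tB: "0 < tB"
    and u_def: "\<And>i t. u i t = exp (integral {0..t} (lam i))"
    and lim1: "((\<lambda>t. deriv (u 1) t * u n t) \<longlongrightarrow> - p) (at_left tB)"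
    and limn: "((\<lambda>t. u 1 t * deriv (u n) t) \<longlongrightarrow> q) (at_left tB)"
    and pq: "p > q"
    and xi1: "(- p / (p - q))^2 + (- p / (p - q)) = 0"
    and xin: "(q / (p - q))^2 + q / (p - q) = 0"
    and R1_def: "\<And>t. R1 t = lam 1 t + 1 / (tB - t)"
  shows "(\<forall>i\<in>{2..n}. lam i absolutely_integrable_on {0<..<tB}) \<and>
         (\<exists>C. ((\<lambda>t. integral {0..t} R1) \<longlongrightarrow> C) (at_left tB))"
proof -
  have isol: "is_solution n k cb rho0 lam0 tB lam rho" using sol by (simp add: maximal_solution_def)
  interpret S1: sys n k cb rho0 lam0 tB lam rho
    by unfold_locales (use n k cb rho0 lam0_12 lam0_mono isol tB in auto)
  have uU: "u = S1.U" by (intro ext) (simp add: u_def S1.U_def S1.I_def)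
  have one: "1 \<in> {1..n}" and nn: "n \<in> {1..n}" using n by auto
  have ev0: "eventually (\<lambda>t. t \<in> {0<..<tB}) (at_left tB)"
    unfolding eventually_at_left_field using tB by (intro exI[of _ 0]) auto
  have l1: "((\<lambda>t. lam 1 t * S1.U 1 t * S1.U n t) \<longlongrightarrow> - p) (at_left tB)"
  proof (rule Lim_transform_eventually[OF lim1])
    show "eventually (\<lambda>t. deriv (u 1) t * u n t = lam 1 t * S1.U 1 t * S1.U n t) (at_left tB)"
      using ev0
    proof eventually_elim
      case (elim t)
      have "deriv (S1.U 1) t = lam 1 t * S1.U 1 t" by (rule S1.deriv_U[OF elim one])
      then show ?case unfolding uU by simp
    qed
  qed
  have ln: "((\<lambda>t. S1.U 1 t * (lam n t * S1.U n t)) \<longlongrightarrow> q) (at_left tB)"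
  proof (rule Lim_transform_eventually[OF limn])
    show "eventually (\<lambda>t. u 1 t * deriv (u n) t = S1.U 1 t * (lam n t * S1.U n t)) (at_left tB)"
      using ev0
    proof eventually_elim
      case (elim t)
      have "deriv (S1.U n) t = lam n t * S1.U n t" by (rule S1.deriv_U[OF elim nn])
      then show ?case unfolding uU by simp
    qed
  qed
  interpret S2: sys2 n k cb rho0 lam0 tB lam rho p q
    by unfold_locales (use sol l1 ln pq xi1 in \<open>auto simp: maximal_solution_def\<close>)
  have R: "R1 = (\<lambda>s. lam 1 s + 1 / (tB - s))" by (intro ext) (rule R1_def)
  show ?thesis using S2.concl1 S2.concl2 unfolding R by blast
qed


end
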